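(* Let $q>3$ be a prime such that $\mathrm{red}_q(H)$ contains a point $Q$ with $x(Q)\equiv-18\pmod q$. Then there exist infinitely many pairs consisting of a squarefree integer $D$ and a primitive integer tuple $[x_0:x_1:x_2:x_3:x_4]\in C_D(\mathbb{Q})$ such that either $q$ divides $D$ or $x_3\equiv0\pmod q$.
   Context: $C_D\subset\mathbb{P}^4$ is the curve over $\mathbb{Q}$ given by $X_0^2-2X_1^2+X_2^2=0$, $X_1^2-2X_2^2+DX_3^2=0$, $X_2^2-2DX_3^2+X_4^2=0$. $E^{(1)}: y^2=x(x+2)(x+6)$, $P=(6,24)\in E^{(1)}(\mathbb{Q})$, $H=\{kP: k\text{ odd}\}\subset E^{(1)}(\mathbb{Q})$, and $\mathrm{red}_q:E^{(1)}(\mathbb{Q})\to E^{(1)}(\mathbb{F}_q)$ is reduction modulo $q$. A primitive tuple means integer coordinates with greatest common divisor $1$. *)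

theory Defs
  imports "HOL-Computational_Algebra.Computational_Algebra" "HOL-Number_Theory.Number_Theory"
begin

text \<open>Points of E^(1): y^2 = x(x+2)(x+6) = x^3 + 8x^2 + 12x over Q.
  None is the point at infinity, Some (x,y) an affine point.\<close>

type_synonym rpoint = "(rat \<times> rat) option"

definition E1_on :: "rat \<Rightarrow> rat \<Rightarrow> bool" where
  "E1_on x y \<longleftrightarrow> y^2 = x * (x + 2) * (x + 6)"

definition E1_points :: "rpoint set" where
  "E1_points = {None} \<union> {Some (x, y) | x y. E1_on x y}"

text \<open>Chord-tangent group law (Weierstrass form with a1=a3=0, a2=8, a4=12, a6=0).\<close>

definition E1_add :: "rpoint \<Rightarrow> rpoint \<Rightarrow> rpoint" where
  "E1_add P1 P2 = (case P1 of None \<Rightarrow> P2 | Some (x1, y1) \<Rightarrow>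
     (case P2 of None \<Rightarrow> P1 | Some (x2, y2) \<Rightarrow>
       (if x1 = x2 \<and> y1 = - y2 then None
        else let l = (if x1 \<noteq> x2 then (y2 - y1) / (x2 - x1)
                      else (3 * x1^2 + 16 * x1 + 12) / (2 * y1));
                 x3 = l^2 - 8 - x1 - x2;
                 y3 = l * (x1 - x3) - y1
             in Some (x3, y3))))"

definition E1_neg :: "rpoint \<Rightarrow> rpoint" where
  "E1_neg P = (case P of None \<Rightarrow> None | Some (x, y) \<Rightarrow> Some (x, - y))"

fun E1_nmul :: "nat \<Rightarrow> rpoint \<Rightarrow> rpoint" where
  "E1_nmul 0 P = None"
| "E1_nmul (Suc n) P = E1_add P (E1_nmul n P)"

definition E1_mul :: "int \<Rightarrow> rpoint \<Rightarrow> rpoint" where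
  "E1_mul k P = (if k \<ge> 0 then E1_nmul (nat k) P else E1_neg (E1_nmul (nat (- k)) P))"

definition P_pt :: rpoint where "P_pt = Some (6, 24)"

definition H_set :: "rpoint set" where
  "H_set = {E1_mul k P_pt | k. odd k}"

definition rat_red :: "int \<Rightarrow> rat \<Rightarrow> int" where
  "rat_red q r = (THE a. 0 \<le> a \<and> a < q \<and>
      [a * snd (quotient_of r) = fst (quotient_of r)] (mod q))"

text \<open>Reduction map E^(1)(Q) \<rightarrow> E^(1)(F_q); points with q dividing the denominator
  of x reduce to the point at infinity (None). Coordinates in F_q are
  represented by residues in {0..q-1}.\<close>

definition red :: "int \<Rightarrow> rpoint \<Rightarrow> (int \<times> int) option" where
  "red q P = (case P of None \<Rightarrow> None | Some (x, y) \<Rightarrow>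
     (if q dvd snd (quotient_of x) then None else Some (rat_red q x, rat_red q y)))"

text \<open>Integer points of the cone over C_D in P^4.\<close>

definition C_eqs :: "int \<Rightarrow> int \<times> int \<times> int \<times> int \<times> int \<Rightarrow> bool" where
  "C_eqs D X = (case X of (x0, x1, x2, x3, x4) \<Rightarrow>
      x0^2 - 2 * x1^2 + x2^2 = 0 \<and> x1^2 - 2 * x2^2 + D * x3^2 = 0 \<and>
      x2^2 - 2 * D * x3^2 + x4^2 = 0)"

definition primitive5 :: "int \<times> int \<times> int \<times> int \<times> int \<Rightarrow> bool" where
  "primitive5 X = (case X of (x0, x1, x2, x3, x4) \<Rightarrow>
      gcd x0 (gcd x1 (gcd x2 (gcd x3 x4))) = 1)"

end

theory Submission
  imports Defs
begin


definition qint :: "int \<Rightarrow> rat \<Rightarrow> bool" where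
  "qint q r \<longleftrightarrow> (\<exists>a b. \<not> q dvd b \<and> r = of_int a / of_int b)"
definition qzero :: "int \<Rightarrow> rat \<Rightarrow> bool" where
  "qzero q r \<longleftrightarrow> (\<exists>a b. q dvd a \<and> \<not> q dvd b \<and> r = of_int a / of_int b)"

lemma ndvd_nz: "\<not> q dvd (b::int) \<Longrightarrow> b \<noteq> 0" by auto

lemma prime_ndvd1: "prime (q::int) \<Longrightarrow> \<not> q dvd 1" using not_prime_unit by blast

lemma frac_eq: "b \<noteq> 0 \<Longrightarrow> d \<noteq> 0 \<Longrightarrow> (of_int a / of_int b :: rat) = of_int c / of_int d \<Longrightarrow> a*d = c*b"
proof -
  assume "b \<noteq> 0" "d \<noteq> 0" "(of_int a / of_int b :: rat) = of_int c / of_int d"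
  hence "(of_int (a*d) :: rat) = of_int (c*b)" by (simp add: field_simps)
  thus ?thesis by (simp only: of_int_eq_iff)
qed

lemma qint_int: "prime q \<Longrightarrow> qint q (of_int k)"
  unfolding qint_def by (rule exI[of _ k], rule exI[of _ 1], auto dest: prime_ndvd1)

lemma qint_num: "prime q \<Longrightarrow> qint q (numeral k)"
  unfolding qint_def by (rule exI[of _ "numeral k"], rule exI[of _ 1], auto dest: prime_ndvd1)
lemma qint_0: "prime q \<Longrightarrow> qint q 0"
  unfolding qint_def by (rule exI[of _ 0], rule exI[of _ 1], auto dest: prime_ndvd1)
lemma qint_1: "prime q \<Longrightarrow> qint q 1"
  unfolding qint_def by (rule exI[of _ 1], rule exI[of _ 1], auto dest: prime_ndvd1)

lemma qzero_imp_qint: "qzero q r \<Longrightarrow> qint q r"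
  unfolding qint_def qzero_def by blast

lemma qzero_0: "prime q \<Longrightarrow> qzero q 0"
  unfolding qzero_def by (rule exI[of _ 0], rule exI[of _ 1]) (auto dest: prime_ndvd1)

lemma qint_prime_nd: "prime q \<Longrightarrow> \<not> q dvd b \<Longrightarrow> \<not> q dvd d \<Longrightarrow> \<not> q dvd (b*d)"
  using prime_dvd_mult_iff by blast

lemma qint_add: assumes "prime q" "qint q r" "qint q s" shows "qint q (r+s)"
proof -
  obtain a b c d where h: "\<not> q dvd b" "r = of_int a / of_int b" "\<not> q dvd d" "s = of_int c / of_int d"
    using assms unfolding qint_def by blast
  have "r + s = of_int (a*d + c*b) / of_int (b*d)" using h ndvd_nz[of q b] ndvd_nz[of q d]
    by (simp add: field_simps)
  thus ?thesis unfolding qint_def using qint_prime_nd[OF assms(1) h(1) h(3)] by blast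
qed

lemma qint_mult: assumes "prime q" "qint q r" "qint q s" shows "qint q (r*s)"
proof -
  obtain a b c d where h: "\<not> q dvd b" "r = of_int a / of_int b" "\<not> q dvd d" "s = of_int c / of_int d"
    using assms unfolding qint_def by blast
  have "r * s = of_int (a*c) / of_int (b*d)" using h by simp
  thus ?thesis unfolding qint_def using qint_prime_nd[OF assms(1) h(1) h(3)] by blast
qed

lemma qint_minus: assumes "qint q r" shows "qint q (-r)"
proof -
  obtain a b where h: "\<not> q dvd b" "r = of_int a / of_int b" using assms unfolding qint_def by blast
  have "-r = of_int (-a) / of_int b" using h by simp
  thus ?thesis unfolding qint_def using h by blast
qed

lemma qint_diff: "prime q \<Longrightarrow> qint q r \<Longrightarrow> qint q s \<Longrightarrow> qint q (r-s)"
  using qint_add[of q r "-s"] qint_minus[of q s] by simp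

lemma qint_pow: "prime q \<Longrightarrow> qint q r \<Longrightarrow> qint q (r^n)"
  by (induction n) (auto intro: qint_mult qint_1)

lemma qzero_add: assumes "prime q" "qzero q r" "qzero q s" shows "qzero q (r+s)"
proof -
  obtain a b c d where h: "q dvd a" "\<not> q dvd b" "r = of_int a / of_int b" "q dvd c" "\<not> q dvd d" "s = of_int c / of_int d"
    using assms unfolding qzero_def by blast
  have "r + s = of_int (a*d + c*b) / of_int (b*d)" using h ndvd_nz[of q b] ndvd_nz[of q d]
    by (simp add: field_simps)
  moreover have "q dvd (a*d + c*b)" using h by simp
  ultimately show ?thesis unfolding qzero_def using qint_prime_nd[OF assms(1) h(2) h(5)] by blast
qed

lemma qzero_mult: assumes "prime q" "qzero q r" "qint q s" shows "qzero q (r*s)"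
proof -
  obtain a b c d where h: "q dvd a" "\<not> q dvd b" "r = of_int a / of_int b" "\<not> q dvd d" "s = of_int c / of_int d"
    using assms unfolding qzero_def qint_def by blast
  have "r * s = of_int (a*c) / of_int (b*d)" using h by simp
  moreover have "q dvd (a*c)" using h by simp
  ultimately show ?thesis unfolding qzero_def using qint_prime_nd[OF assms(1) h(2) h(4)] by blast
qed

lemma qzero_mult2: "prime q \<Longrightarrow> qint q s \<Longrightarrow> qzero q r \<Longrightarrow> qzero q (s*r)"
  using qzero_mult[of q r s] by (simp add: mult.commute)

lemma qzero_minus: assumes "qzero q r" shows "qzero q (-r)"
proof -
  obtain a b where h: "q dvd a" "\<not> q dvd b" "r = of_int a / of_int b" using assms unfolding qzero_def by blast
  have "-r = of_int (-a) / of_int b" using h by simp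
  moreover have "q dvd -a" using h by simp
  ultimately show ?thesis unfolding qzero_def using h by blast
qed

lemma qzero_diff: "prime q \<Longrightarrow> qzero q r \<Longrightarrow> qzero q s \<Longrightarrow> qzero q (r-s)"
  using qzero_add[of q r "-s"] qzero_minus[of q s] by simp

lemma qzero_int_iff: assumes "prime q" shows "qzero q (of_int k) \<longleftrightarrow> q dvd k"
proof
  assume "qzero q (of_int k)"
  then obtain a b where h: "q dvd a" "\<not> q dvd b" "of_int k = (of_int a / of_int b :: rat)" unfolding qzero_def by blast
  have "k * b = a * 1" using frac_eq[of 1 b k a] h ndvd_nz[of q b] by simp
  hence "q dvd k * b" using h by simp
  thus "q dvd k" using h assms prime_dvd_mult_iff by blast
next
  assume "q dvd k" thus "qzero q (of_int k)" unfolding qzero_def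
    using assms by (intro exI[of _ k] exI[of _ 1]) (auto dest: prime_ndvd1)
qed

lemma qdiv_int: assumes "prime q" "qint q n" "qint q d" "\<not> qzero q d" shows "qint q (n/d)"
proof -
  obtain a b c e where h: "\<not> q dvd b" "n = of_int a / of_int b" "\<not> q dvd e" "d = of_int c / of_int e"
    using assms unfolding qint_def by blast
  have "\<not> q dvd c" using assms(4) h unfolding qzero_def by blast
  have "n / d = of_int (a*e) / of_int (b*c)" using h ndvd_nz[of q e] by simp
  thus ?thesis unfolding qint_def using qint_prime_nd[OF assms(1) h(1) \<open>\<not> q dvd c\<close>] by blast
qed

lemma qdiv_zero: assumes "prime q" "qzero q n" "qint q d" "\<not> qzero q d" shows "qzero q (n/d)"
proof -
  have "qint q (1/d)" using qdiv_int[OF assms(1) qint_1[OF assms(1)] assms(3,4)] by simp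
  hence "qzero q (n * (1/d))" by (rule qzero_mult[OF assms(1,2)])
  thus ?thesis by simp
qed

lemma unit_add: "prime q \<Longrightarrow> qint q u \<Longrightarrow> \<not> qzero q u \<Longrightarrow> qzero q e \<Longrightarrow> \<not> qzero q (u + e)"
  using qzero_diff[of q "u+e" e] by auto

lemma not_qint_div: assumes "prime q" "qint q u" "\<not> qzero q u" "qzero q d" "d \<noteq> 0"
  shows "\<not> qint q (u/d)"
proof
  assume "qint q (u/d)"
  hence "qzero q ((u/d)*d)" using qzero_mult2[OF assms(1) _ assms(4)] by blast
  thus False using assms(3,5) by simp
qed

lemma qzero_mult_cases: assumes "prime q" "qint q r" "qint q s" "qzero q (r*s)"
  shows "qzero q r \<or> qzero q s"
proof -
  obtain a b c d where h: "\<not> q dvd b" "r = of_int a / of_int b" "\<not> q dvd d" "s = of_int c / of_int d"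
    using assms unfolding qint_def by blast
  obtain e f where g: "q dvd e" "\<not> q dvd f" "r*s = of_int e / of_int f" using assms unfolding qzero_def by blast
  have "of_int (a*c) / of_int (b*d) = (of_int e / of_int f :: rat)" using h g by simp
  moreover have "b*d \<noteq> 0" "f \<noteq> 0" using ndvd_nz[of q b] ndvd_nz[of q d] ndvd_nz[of q f] g(2) h(1,3) by auto
  ultimately have "(a*c)*f = e*(b*d)" using frac_eq[of "b*d" f "a*c" e] by blast
  hence "q dvd (a*c)*f" using g(1) by simp
  hence "q dvd a \<or> q dvd c" using g(2) assms(1) prime_dvd_mult_iff by blast
  thus ?thesis unfolding qzero_def using h by blast
qed

lemma rat_reduced: fixes r :: rat obtains n d where "r = of_int n / of_int d" "d > 0" "coprime n d"
  using quotient_of_div[of r "fst (quotient_of r)" "snd (quotient_of r)"]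
    quotient_of_denom_pos'[of r] quotient_of_coprime[of r "fst (quotient_of r)" "snd (quotient_of r)"]
  by auto

lemma qint_reduced: assumes "prime q" "qint q r" "r = of_int n / of_int d" "d \<noteq> 0" "coprime n d"
  shows "\<not> q dvd d"
proof
  assume qd: "q dvd d"
  obtain a b where h: "\<not> q dvd b" "r = of_int a / of_int b" using assms unfolding qint_def by blast
  have "n * b = a * d" using frac_eq[of d b n a] assms(3,4) h ndvd_nz[of q b] by simp
  hence "q dvd n * b" using qd by simp
  hence "q dvd n" using h(1) assms(1) prime_dvd_mult_iff by blast
  hence "q dvd gcd n d" using qd by simp
  hence "is_unit q" using assms(5) by simp
  thus False using assms(1) not_prime_unit by blast
qed

lemma qint_iff_den: assumes "prime q" shows "qint q r \<longleftrightarrow> \<not> q dvd snd (quotient_of r)"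
proof
  assume "qint q r"
  thus "\<not> q dvd snd (quotient_of r)"
    using qint_reduced[OF assms, of r "fst (quotient_of r)" "snd (quotient_of r)"]
      quotient_of_div[of r "fst (quotient_of r)" "snd (quotient_of r)"]
      quotient_of_denom_pos'[of r] quotient_of_coprime[of r "fst (quotient_of r)" "snd (quotient_of r)"]
    by auto
next
  assume "\<not> q dvd snd (quotient_of r)"
  thus "qint q r" unfolding qint_def
    using quotient_of_div[of r "fst (quotient_of r)" "snd (quotient_of r)"] by auto
qed

lemma qint_sq: assumes "prime q" "qint q (r^2)" shows "qint q r"
proof -
  obtain n d where nd: "r = of_int n / of_int d" "d > 0" "coprime n d" by (rule rat_reduced)
  have "r^2 = of_int (n^2) / of_int (d^2)" using nd by (simp add: power_divide)
  moreover have "coprime (n^2) (d^2)" using nd by simp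
  ultimately have "\<not> q dvd d^2" using qint_reduced[OF assms] nd by simp
  hence "\<not> q dvd d" by (metis dvd_mult2 power2_eq_square)
  thus ?thesis unfolding qint_def using nd by blast
qed

lemma qzero_sq: assumes "prime q" "qzero q (r^2)" shows "qzero q r"
proof -
  obtain n d where nd: "r = of_int n / of_int d" "d > 0" "coprime n d" by (rule rat_reduced)
  have qi: "qint q r" using qint_sq[OF assms(1) qzero_imp_qint[OF assms(2)]] .
  hence nq: "\<not> q dvd d" using qint_reduced[OF assms(1) qi nd(1)] nd by simp
  obtain a b where h: "q dvd a" "\<not> q dvd b" "r^2 = of_int a / of_int b" using assms unfolding qzero_def by blast
  have "r^2 = of_int (n^2) / of_int (d^2)" using nd by (simp add: power_divide)
  hence "n^2 * b = a * d^2" using frac_eq[of "d^2" b "n^2" a] h nd ndvd_nz[of q b] by simp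
  hence "q dvd n^2 * b" using h by simp
  hence "q dvd n" using h(2) assms(1) prime_dvd_mult_iff prime_dvd_power by blast
  thus ?thesis unfolding qzero_def using nd nq by blast
qed

lemma nonqint_inv: assumes "prime q" "\<not> qint q x" shows "qzero q (1/x)"
proof -
  obtain n d where nd: "x = of_int n / of_int d" "d > 0" "coprime n d" by (rule rat_reduced)
  have qd: "q dvd d" using assms nd unfolding qint_def by blast
  have "\<not> q dvd n"
  proof
    assume "q dvd n" hence "q dvd gcd n d" using qd by simp
    hence "is_unit q" using nd(3) by simp
    thus False using assms(1) not_prime_unit by blast
  qed
  moreover have "1/x = of_int d / of_int n" using nd by simp
  ultimately show ?thesis unfolding qzero_def using qd by blast
qed

lemma rat_red_props: assumes "prime q" "qint q r"
  shows "0 \<le> rat_red q r \<and> rat_red q r < q \<and> qzero q (r - of_int (rat_red q r))"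
proof -
  define n where "n = fst (quotient_of r)"
  define d where "d = snd (quotient_of r)"
  have rnd: "r = of_int n / of_int d" unfolding n_def d_def using quotient_of_div by simp
  have nq: "\<not> q dvd d" using assms qint_iff_den unfolding d_def by blast
  have qpos: "q > 1" using assms(1) prime_gt_1_int by blast
  have cop: "coprime d q" using nq assms(1) by (meson coprime_commute prime_imp_coprime)
  obtain y where y: "[d * y = 1] (mod q)" using cong_solve_coprime_int[OF cop] by blast
  define a where "a = (n * y) mod q"
  have ex: "0 \<le> a \<and> a < q \<and> [a * d = n] (mod q)"
  proof -
    have "[a * d = n * y * d] (mod q)" unfolding a_def by (simp add: cong_def mod_mult_left_eq)
    also have "[n * y * d = n * (d * y)] (mod q)" by (simp add: ac_simps)
    also have "[n * (d * y) = n * 1] (mod q)" using y by (rule cong_scalar_left)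
    finally show ?thesis unfolding a_def using qpos by simp
  qed
  have uniq: "b = a" if "0 \<le> b \<and> b < q \<and> [b * d = n] (mod q)" for b
  proof -
    have "[b * d = a * d] (mod q)" using that ex by (meson cong_sym cong_trans)
    hence "q dvd (b - a) * d" by (simp add: cong_iff_dvd_diff algebra_simps)
    hence "q dvd b - a" using nq assms(1) prime_dvd_mult_iff by blast
    show ?thesis
    proof (rule ccontr)
      assume "b \<noteq> a"
      hence "b > a \<or> a > b" by auto
      thus False
      proof
        assume "b > a" moreover have "b - a < q" using that ex by linarith
        ultimately show False using zdvd_not_zless[of "b-a" q] \<open>q dvd b - a\<close> by linarith
      next
        assume "a > b" moreover have "q dvd a - b" using \<open>q dvd b - a\<close> by (simp add: dvd_diff_commute)
        moreover have "a - b < q" using that ex by linarith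
        ultimately show False using zdvd_not_zless[of "a-b" q] by linarith
      qed
    qed
  qed
  have rr: "rat_red q r = a" unfolding rat_red_def n_def[symmetric] d_def[symmetric]
    using ex uniq by (intro the_equality) blast+
  have "r - of_int a = of_int (n - a*d) / of_int d" using rnd ndvd_nz[OF nq] by (simp add: field_simps)
  moreover have "q dvd n - a*d" using ex by (simp add: cong_iff_dvd_diff dvd_diff_commute)
  ultimately show ?thesis unfolding rr qzero_def using ex nq by blast
qed



definition fc :: "rat \<Rightarrow> rat" where "fc x = x*(x+2)*(x+6)"

definition oncurve :: "rpoint \<Rightarrow> bool" where
  "oncurve A = (case A of None \<Rightarrow> True | Some (x,y) \<Rightarrow> y^2 = fc x)"

lemma oncurve_simps[simp]: "oncurve None" "oncurve (Some (x,y)) \<longleftrightarrow> y^2 = fc x"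
  by (auto simp: oncurve_def)

lemma chord_vieta:
  fixes x1 y1 x2 y2 X :: rat
  assumes c1: "y1^2 = fc x1" and c2: "y2^2 = fc x2" and ne: "x1 \<noteq> x2"
  defines "l \<equiv> (y2-y1)/(x2-x1)"
  defines "m \<equiv> y1 - l*x1"
  defines "x3 \<equiv> l^2 - 8 - x1 - x2"
  shows "fc X - (l*X+m)^2 = (X-x1)*(X-x2)*(X-x3)"
proof -
  have y1: "y1 = l*x1 + m" unfolding m_def by simp
  have "l*(x2-x1) = y2-y1" using ne unfolding l_def by simp
  hence y2: "y2 = l*x2 + m" unfolding m_def by (simp add: algebra_simps)
  have p1: "x1*(x1+2)*(x1+6) = (l*x1+m)^2" using c1 y1 by (simp add: fc_def)
  have p2: "x2*(x2+2)*(x2+6) = (l*x2+m)^2" using c2 y2 by (simp add: fc_def)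
  have "(x1 - x2) * (x1^2 + x1*x2 + x2^2 + (8 - l^2)*(x1+x2) + 12 - 2*l*m) = 
     (x1*(x1+2)*(x1+6) - (l*x1+m)^2) - (x2*(x2+2)*(x2+6) - (l*x2+m)^2)"
    by (simp add: algebra_simps power2_eq_square power3_eq_cube)
  also have "\<dots> = 0" using p1 p2 by simp
  finally have "x1^2 + x1*x2 + x2^2 + (8 - l^2)*(x1+x2) + 12 - 2*l*m = 0" using ne by simp
  hence e1: "12 - 2*l*m = x1*x2 + x1*x3 + x2*x3" unfolding x3_def by (simp add: algebra_simps power2_eq_square)
  have e0: "m^2 = x1*x2*x3"
  proof -
    have "x1*(x1+2)*(x1+6) - (l*x1+m)^2 = x1^3 + (8 - l^2)*x1^2 + (12 - 2*l*m)*x1 - m^2"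
      by (simp add: algebra_simps power2_eq_square power3_eq_cube)
    also have "\<dots> = x1*x2*x3 - m^2" unfolding e1 unfolding x3_def by (simp add: algebra_simps power2_eq_square power3_eq_cube)
    finally show ?thesis using p1 by simp
  qed
  have "fc X - (l*X+m)^2 = X^3 + (8 - l^2)*X^2 + (12 - 2*l*m)*X - m^2"
    by (simp add: fc_def algebra_simps power2_eq_square power3_eq_cube)
  also have "\<dots> = (X-x1)*(X-x2)*(X-x3)" unfolding e1 e0 unfolding x3_def
    by (simp add: algebra_simps power2_eq_square power3_eq_cube)
  finally show ?thesis .
qed

lemma tangent_vieta:
  fixes x1 y1 X :: rat
  assumes c1: "y1^2 = fc x1" and ne: "y1 \<noteq> 0"
  defines "l \<equiv> (3 * x1^2 + 16 * x1 + 12) / (2 * y1)"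
  defines "m \<equiv> y1 - l*x1"
  defines "x3 \<equiv> l^2 - 8 - x1 - x1"
  shows "fc X - (l*X+m)^2 = (X-x1)*(X-x1)*(X-x3)"
proof -
  have y1: "y1 = l*x1 + m" unfolding m_def by simp
  have d: "3 * x1^2 + 16 * x1 + 12 = 2*l*y1" using ne unfolding l_def by simp
  have p1: "x1*(x1+2)*(x1+6) = (l*x1+m)^2" using c1 y1 by (simp add: fc_def)
  have e1: "12 - 2*l*m = x1*x1 + x1*x3 + x1*x3"
  proof -
    have "3 * x1^2 + 16 * x1 + 12 = 2*l*(l*x1+m)" using d y1 by simp
    thus ?thesis unfolding x3_def by (simp add: algebra_simps power2_eq_square)
  qed
  have e0: "m^2 = x1*x1*x3"
  proof -
    have "x1*(x1+2)*(x1+6) - (l*x1+m)^2 = x1^3 + (8 - l^2)*x1^2 + (12 - 2*l*m)*x1 - m^2"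
      by (simp add: algebra_simps power2_eq_square power3_eq_cube)
    also have "\<dots> = x1*x1*x3 - m^2" unfolding e1 unfolding x3_def by (simp add: algebra_simps power2_eq_square power3_eq_cube)
    finally show ?thesis using p1 by simp
  qed
  have "fc X - (l*X+m)^2 = X^3 + (8 - l^2)*X^2 + (12 - 2*l*m)*X - m^2"
    by (simp add: fc_def algebra_simps power2_eq_square power3_eq_cube)
  also have "\<dots> = (X-x1)*(X-x1)*(X-x3)" unfolding e1 e0 unfolding x3_def
    by (simp add: algebra_simps power2_eq_square power3_eq_cube)
  finally show ?thesis .
qed

lemma add_None1[simp]: "E1_add None B = B" by (simp add: E1_add_def)
lemma add_None2[simp]: "E1_add A None = A" by (cases A) (auto simp: E1_add_def)

lemma add_chord:
  assumes "x1 \<noteq> x2"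
  shows "E1_add (Some (x1,y1)) (Some (x2,y2)) =
    Some (((y2-y1)/(x2-x1))^2 - 8 - x1 - x2,
          ((y2-y1)/(x2-x1)) * (x1 - (((y2-y1)/(x2-x1))^2 - 8 - x1 - x2)) - y1)"
  using assms by (simp add: E1_add_def Let_def)

lemma add_tangent:
  assumes "y1 \<noteq> 0"
  shows "E1_add (Some (x1,y1)) (Some (x1,y1)) =
    Some (((3 * x1^2 + 16 * x1 + 12) / (2 * y1))^2 - 8 - x1 - x1,
          ((3 * x1^2 + 16 * x1 + 12) / (2 * y1)) * (x1 - (((3 * x1^2 + 16 * x1 + 12) / (2 * y1))^2 - 8 - x1 - x1)) - y1)"
  using assms by (simp add: E1_add_def Let_def)

lemma add_inv: "E1_add (Some (x,y)) (Some (x,-y)) = None"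
  by (simp add: E1_add_def)

lemma same_x: "y1^2 = fc x \<Longrightarrow> y2^2 = fc x \<Longrightarrow> y2 = y1 \<or> y2 = -y1"
  by (metis power2_eq_iff)

lemma chord_y: "l * (x1 - x3) - y1 = - (l * x3 + (y1 - l*x1))" for l x1 x3 y1 :: rat
  by (simp add: algebra_simps)

lemma oncurve_add: assumes "oncurve A" "oncurve B" shows "oncurve (E1_add A B)"
proof (cases A)
  case None thus ?thesis using assms by simp
next
  case (Some a) then obtain x1 y1 where A: "A = Some (x1,y1)" by (cases a) auto
  show ?thesis
  proof (cases B)
    case None thus ?thesis using assms by simp
  next
    case (Some b) then obtain x2 y2 where B: "B = Some (x2,y2)" by (cases b) auto
    have c1: "y1^2 = fc x1" and c2: "y2^2 = fc x2" using assms A B by auto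
    show ?thesis
    proof (cases "x1 = x2")
      case False
      define l where "l = (y2-y1)/(x2-x1)"
      define m where "m = y1 - l*x1"
      define x3 where "x3 = l^2 - 8 - x1 - x2"
      have v: "fc x3 - (l*x3+m)^2 = (x3-x1)*(x3-x2)*(x3-x3)"
        using chord_vieta[OF c1 c2 False, of x3] unfolding l_def m_def x3_def by simp
      have "E1_add A B = Some (x3, - (l * x3 + m))"
        unfolding A B add_chord[OF False] l_def[symmetric] x3_def[symmetric] m_def chord_y ..
      thus ?thesis using v by (simp add: power2_eq_square algebra_simps)
    next
      case True
      show ?thesis
      proof (cases "y2 = -y1")
        case True thus ?thesis using A B \<open>x1 = x2\<close> by (simp add: E1_add_def)
      next
        case False
        hence y21: "y2 = y1" using same_x[of y1 x1 y2] c1 c2 \<open>x1 = x2\<close> by auto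
        hence y0: "y1 \<noteq> 0" using False by auto
        define l where "l = (3 * x1^2 + 16 * x1 + 12) / (2 * y1)"
        define m where "m = y1 - l*x1"
        define x3 where "x3 = l^2 - 8 - x1 - x1"
        have v: "fc x3 - (l*x3+m)^2 = (x3-x1)*(x3-x1)*(x3-x3)"
          using tangent_vieta[OF c1 y0, of x3] unfolding l_def m_def x3_def by simp
        have "E1_add A B = Some (x3, - (l * x3 + m))"
          unfolding A B \<open>x1 = x2\<close>[symmetric] y21 add_tangent[OF y0] l_def[symmetric] x3_def[symmetric] m_def chord_y ..
        thus ?thesis using v by (simp add: power2_eq_square algebra_simps)
      qed
    qed
  qed
qed



lemma chord_coeffs:
  fixes x1 y1 x2 y2 :: rat
  assumes c1: "y1^2 = fc x1" and c2: "y2^2 = fc x2" and ne: "x1 \<noteq> x2"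
  defines "l \<equiv> (y2-y1)/(x2-x1)"
  defines "m \<equiv> y1 - l*x1"
  defines "x3 \<equiv> l^2 - 8 - x1 - x2"
  shows "12 - 2*l*m = x1*x2 + x1*x3 + x2*x3" "m^2 = x1*x2*x3"
proof -
  have h: "\<And>X. fc X - (l*X+m)^2 = (X-x1)*(X-x2)*(X-x3)"
    using chord_vieta[OF c1 c2 ne] unfolding l_def m_def x3_def by blast
  have h0: "m^2 = x1*x2*x3" using h[of 0] by (simp add: fc_def)
  have h1: "fc 1 - (l+m)^2 = (1-x1)*(1-x2)*(1-x3)" using h[of 1] by simp
  have hm: "fc (-1) - (m-l)^2 = (-1-x1)*(-1-x2)*(-1-x3)" using h[of "-1"] by (simp add: algebra_simps power2_eq_square)
  have "fc 1 - fc (-1) - (l+m)^2 + (m-l)^2 = (1-x1)*(1-x2)*(1-x3) - (-1-x1)*(-1-x2)*(-1-x3)"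
    using h1 hm by simp
  hence "26 - 4*l*m = 2 + 2*(x1*x2 + x1*x3 + x2*x3)"
    by (simp add: fc_def algebra_simps power2_eq_square)
  thus "12 - 2*l*m = x1*x2 + x1*x3 + x2*x3" by simp
  show "m^2 = x1*x2*x3" by (rule h0)
qed

lemma fc_root_deriv: assumes "fc c = 0" shows "3*c^2 + 16*c + 12 \<noteq> 0"
proof -
  have "c = 0 \<or> c = -2 \<or> c = -6" using assms by (auto simp: fc_def add_eq_0_iff)
  thus ?thesis by (auto simp: power2_eq_square)
qed

lemma neg_neg[simp]: "E1_neg (E1_neg A) = A"
  by (cases A) (auto simp: E1_neg_def)
lemma neg_Some[simp]: "E1_neg (Some (x,y)) = Some (x,-y)" by (simp add: E1_neg_def)
lemma neg_None[simp]: "E1_neg None = None" by (simp add: E1_neg_def)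
lemma oncurve_neg: "oncurve A \<Longrightarrow> oncurve (E1_neg A)"
  by (cases A) (auto simp: E1_neg_def)

lemma cancel:
  assumes "oncurve C" "oncurve A"
  shows "E1_add (E1_neg C) (E1_add C A) = A"
proof (cases C)
  case None thus ?thesis by simp
next
  case (Some cc) then obtain c1 c2 where C: "C = Some (c1,c2)" by (cases cc) auto
  show ?thesis
  proof (cases A)
    case None thus ?thesis using C by (simp add: E1_add_def)
  next
    case (Some aa) then obtain a1 a2 where A: "A = Some (a1,a2)" by (cases aa) auto
    have cc: "c2^2 = fc c1" and ca: "a2^2 = fc a1" using assms A C by auto
    show ?thesis
    proof (cases "a1 = c1")
      case True
      show ?thesis
      proof (cases "a2 = -c2")
        case True
        thus ?thesis using A C \<open>a1 = c1\<close> by (simp add: E1_add_def)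
      next
        case False
        hence a2: "a2 = c2" using same_x[of c2 c1 a2] cc ca \<open>a1 = c1\<close> by auto
        hence c20: "c2 \<noteq> 0" using False by auto
        define l where "l = (3 * c1^2 + 16 * c1 + 12) / (2 * c2)"
        define x3 where "x3 = l^2 - 8 - c1 - c1"
        have S: "E1_add C A = Some (x3, l * (c1 - x3) - c2)"
          unfolding A C \<open>a1 = c1\<close> a2 add_tangent[OF c20] l_def[symmetric] x3_def[symmetric] ..
        show ?thesis
        proof (cases "x3 = c1")
          case False
          have sl: "(l * (c1 - x3) - c2 - (-c2)) / (x3 - c1) = -l" using False
            by (simp add: field_simps)
          have "E1_add (Some (c1, -c2)) (Some (x3, l * (c1 - x3) - c2)) = Some (c1, c2)"
            unfolding add_chord[OF False[symmetric]] sl unfolding x3_def by (simp add: algebra_simps)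
          thus ?thesis using S A C \<open>a1 = c1\<close> a2 by simp
        next
          case True
          have m: "-c2 \<noteq> 0" using c20 by simp
          have sl: "(3 * c1^2 + 16 * c1 + 12) / (2 * (-c2)) = -l" unfolding l_def by (simp add: field_simps)
          have "E1_add (Some (c1, -c2)) (Some (c1, -c2)) = Some (c1, c2)"
            unfolding add_tangent[OF m] sl using True unfolding x3_def by (simp add: algebra_simps)
          thus ?thesis using S A C \<open>a1 = c1\<close> a2 True by simp
        qed
      qed
    next
      case False
      hence ne: "c1 \<noteq> a1" by simp
      define l where "l = (a2-c2)/(a1-c1)"
      define m where "m = c2 - l*c1"
      define x3 where "x3 = l^2 - 8 - c1 - a1"
      have la: "l * (a1 - c1) = a2 - c2" unfolding l_def using ne by simp
      have S: "E1_add C A = Some (x3, l * (c1 - x3) - c2)"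
        unfolding A C add_chord[OF ne] l_def[symmetric] x3_def[symmetric] ..
      show ?thesis
      proof (cases "x3 = c1")
        case False
        have sl: "(l * (c1 - x3) - c2 - (-c2)) / (x3 - c1) = -l" using False
          by (simp add: field_simps)
        have "E1_add (Some (c1, -c2)) (Some (x3, l * (c1 - x3) - c2)) = Some (a1, a2)"
          unfolding add_chord[OF False[symmetric]] sl using la unfolding x3_def
          by (simp add: algebra_simps)
        thus ?thesis using S A C by simp
      next
        case True
        have co: "12 - 2*l*m = c1*a1 + c1*x3 + a1*x3" "m^2 = c1*a1*x3"
          using chord_coeffs[OF cc ca ne] unfolding l_def m_def x3_def by auto
        have lsq: "l^2 = 8 + 2*c1 + a1" using True unfolding x3_def by simp
        have der: "3 * c1^2 + 16 * c1 + 12 = 2 * l * c2"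
        proof -
          have "2 * l * c2 = 2*l^2*c1 + 2*l*m" unfolding m_def by (simp add: algebra_simps power2_eq_square)
          also have "\<dots> = 3 * c1^2 + 16 * c1 + 12" using co(1) lsq True by (simp add: algebra_simps power2_eq_square)
          finally show ?thesis by simp
        qed
        have c20: "c2 \<noteq> 0"
        proof
          assume "c2 = 0"
          hence "fc c1 = 0" using cc by simp
          thus False using fc_root_deriv der \<open>c2 = 0\<close> by simp
        qed
        have m: "-c2 \<noteq> 0" using c20 by simp
        have sl: "(3 * c1^2 + 16 * c1 + 12) / (2 * (-c2)) = -l" using der c20 by (simp add: field_simps)
        have y3: "l * (c1 - x3) - c2 = -c2" using True by simp
        have "E1_add (Some (c1, -c2)) (Some (c1, -c2)) = Some (a1, a2)"
          unfolding add_tangent[OF m] sl using lsq la by (simp add: algebra_simps)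
        thus ?thesis using S A C True y3 by simp
      qed
    qed
  qed
qed



definition triv :: "rat \<Rightarrow> bool" where
  "triv x \<longleftrightarrow> (\<exists>s. x = s^2) \<and> (\<exists>s. x + 2 = s^2) \<and> (\<exists>s. x + 6 = s^2)"
definition ocls :: "rat \<Rightarrow> bool" where
  "ocls x \<longleftrightarrow> (\<exists>s. x = 6*s^2) \<and> (\<exists>s. x + 2 = 2*s^2) \<and> (\<exists>s. x + 6 = 3*s^2)"

lemma not_sq_prime: assumes "prime (p::int)" "\<not> p dvd k" shows "(s::rat)^2 \<noteq> of_int (p*k)"
proof
  assume h: "s^2 = of_int (p*k)"
  obtain n d where nd: "s = of_int n / of_int d" "d > 0" "coprime n d" by (rule rat_reduced)
  have "(of_int n / of_int d)^2 = (of_int (p*k) :: rat)" using h nd by simp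
  hence "(of_int n)^2 = (of_int (p*k) :: rat) * (of_int d)^2" using nd(2) by (simp add: power_divide divide_eq_eq)
  hence "of_int (n^2) = (of_int (p*k*d^2) :: rat)" by simp
  hence e: "n^2 = p*k*d^2" by (simp only: of_int_eq_iff)
  hence "p dvd n^2" by simp
  hence pn: "p dvd n" using assms(1) prime_dvd_power by blast
  then obtain t where t: "n = p*t" by blast
  have p0: "p \<noteq> 0" using assms(1) by auto
  have "p*(p*t^2) = p*(k*d^2)" using e t by (simp add: power2_eq_square ac_simps)
  hence "p*t^2 = k*d^2" using p0 by (rule mult_left_cancel[THEN iffD1, rotated])
  hence "p dvd k*d^2" by (metis dvd_triv_left)
  hence "p dvd d^2" using assms prime_dvd_mult_iff by blast
  hence "p dvd d" using assms(1) prime_dvd_power by blast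
  hence "p dvd gcd n d" using pn by simp
  hence "is_unit p" using nd(3) by simp
  thus False using assms(1) by auto
qed

lemma not_sq2: "(s::rat)^2 \<noteq> 2" using not_sq_prime[of 2 1 s] by simp
lemma not_sq6: "(s::rat)^2 \<noteq> 6" using not_sq_prime[of 2 3 s] by simp

lemma triv_nz: assumes "triv x" shows "x \<noteq> 0" "x + 2 \<noteq> 0" "x + 6 \<noteq> 0"
proof -
  obtain s t u where st: "x = s^2" "x + 2 = t^2" "x+6 = u^2" using assms unfolding triv_def by blast
  have x0: "x \<ge> 0" using st by simp
  show "x \<noteq> 0" using st not_sq2[of t] by auto
  show "x + 2 \<noteq> 0" "x + 6 \<noteq> 0" using x0 by auto
qed

lemma ocls_nz: assumes "ocls x" shows "x \<noteq> 0" "x + 2 \<noteq> 0" "x + 6 \<noteq> 0" "x > 0"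
proof -
  obtain s t u where st: "x = 6*s^2" "x + 2 = 2*t^2" "x+6 = 3*u^2" using assms unfolding ocls_def by blast
  have x0: "x \<ge> 0" using st by simp
  show xn: "x \<noteq> 0" using st not_sq2[of u] by auto
  show "x + 2 \<noteq> 0" "x + 6 \<noteq> 0" using x0 by auto
  show "x > 0" using x0 xn by simp
qed

lemma cls_step:
  fixes a b z M c d e r s t :: rat
  assumes "a*b*z = M^2" "a = c*s^2" "b = d*t^2" "a \<noteq> 0" "b \<noteq> 0" "c*d = e*r^2" "r \<noteq> 0"
  shows "\<exists>u. z = e*u^2"
proof -
  have nz: "c \<noteq> 0" "d \<noteq> 0" "s \<noteq> 0" "t \<noteq> 0" using assms by auto
  hence e0: "e \<noteq> 0" using assms(6,7) by auto
  have "z = M^2/(a*b)" using assms(1,4,5) by (simp add: field_simps)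
  also have "\<dots> = M^2/(e*r^2*s^2*t^2)" using assms(2,3,6) by (simp add: ac_simps)
  also have "\<dots> = e * (M/(e*r*s*t))^2" using e0 nz assms(7) by (simp add: field_simps power2_eq_square)
  finally show ?thesis by blast
qed

lemma add_prod:
  assumes "oncurve (Some (x1,y1))" "oncurve (Some (x2,y2))"
    "E1_add (Some (x1,y1)) (Some (x2,y2)) = Some (x3,y3)"
  shows "(\<exists>M. x1*x2*x3 = M^2) \<and> (\<exists>M. (x1+2)*(x2+2)*(x3+2) = M^2) \<and> (\<exists>M. (x1+6)*(x2+6)*(x3+6) = M^2)"
proof -
  have c1: "y1^2 = fc x1" and c2: "y2^2 = fc x2" using assms by auto
  show ?thesis
  proof (cases "x1 = x2")
    case False
    define l where "l = (y2-y1)/(x2-x1)"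
    define m where "m = y1 - l*x1"
    define x3' where "x3' = l^2 - 8 - x1 - x2"
    have v: "\<And>X. fc X - (l*X+m)^2 = (X-x1)*(X-x2)*(X-x3')"
      using chord_vieta[OF c1 c2 False] unfolding l_def m_def x3'_def by blast
    have "x3 = x3'" using assms(3) unfolding add_chord[OF False] l_def[symmetric] x3'_def[symmetric] by simp
    moreover have "x1*x2*x3' = m^2" using v[of 0] by (simp add: fc_def)
    moreover have "(x1+2)*(x2+2)*(x3'+2) = (m-2*l)^2" using v[of "-2"] by (simp add: fc_def algebra_simps power2_eq_square)
    moreover have "(x1+6)*(x2+6)*(x3'+6) = (m-6*l)^2" using v[of "-6"] by (simp add: fc_def algebra_simps power2_eq_square)
    ultimately show ?thesis by blast
  next
    case True
    have ny: "\<not> (y1 = -y2)" using assms(3) True by (auto simp: E1_add_def)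
    hence y21: "y2 = y1" using same_x[of y1 x1 y2] c1 c2 True by auto
    hence y0: "y1 \<noteq> 0" using ny by auto
    define l where "l = (3 * x1^2 + 16 * x1 + 12) / (2 * y1)"
    define m where "m = y1 - l*x1"
    define x3' where "x3' = l^2 - 8 - x1 - x1"
    have v: "\<And>X. fc X - (l*X+m)^2 = (X-x1)*(X-x1)*(X-x3')"
      using tangent_vieta[OF c1 y0] unfolding l_def m_def x3'_def by blast
    have "x3 = x3'" using assms(3) unfolding True[symmetric] y21 add_tangent[OF y0] l_def[symmetric] x3'_def[symmetric] by simp
    moreover have "x1*x1*x3' = m^2" using v[of 0] by (simp add: fc_def)
    moreover have "(x1+2)*(x1+2)*(x3'+2) = (m-2*l)^2" using v[of "-2"] by (simp add: fc_def algebra_simps power2_eq_square)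
    moreover have "(x1+6)*(x1+6)*(x3'+6) = (m-6*l)^2" using v[of "-6"] by (simp add: fc_def algebra_simps power2_eq_square)
    ultimately show ?thesis using True by blast
  qed
qed

lemma cls_tt:
  assumes "oncurve (Some (x1,y1))" "oncurve (Some (x2,y2))"
    "E1_add (Some (x1,y1)) (Some (x2,y2)) = Some (x3,y3)" "triv x1" "triv x2"
  shows "triv x3"
proof -
  note p = add_prod[OF assms(1-3)]
  note n1 = triv_nz[OF assms(4)] and n2 = triv_nz[OF assms(5)]
  obtain s1 t1 u1 where a: "x1 = 1*s1^2" "x1+2 = 1*t1^2" "x1+6 = 1*u1^2" using assms(4) unfolding triv_def by auto
  obtain s2 t2 u2 where b: "x2 = 1*s2^2" "x2+2 = 1*t2^2" "x2+6 = 1*u2^2" using assms(5) unfolding triv_def by auto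
  have one: "(1::rat)*1 = 1*1^2" by simp
  show ?thesis unfolding triv_def
    using p cls_step[OF _ a(1) b(1) n1(1) n2(1) one] cls_step[OF _ a(2) b(2) n1(2) n2(2) one]
      cls_step[OF _ a(3) b(3) n1(3) n2(3) one] by auto
qed

lemma cls_to:
  assumes "oncurve (Some (x1,y1))" "oncurve (Some (x2,y2))"
    "E1_add (Some (x1,y1)) (Some (x2,y2)) = Some (x3,y3)" "triv x1" "ocls x2"
  shows "ocls x3"
proof -
  note p = add_prod[OF assms(1-3)]
  note n1 = triv_nz[OF assms(4)] and n2 = ocls_nz[OF assms(5)]
  obtain s1 t1 u1 where a: "x1 = 1*s1^2" "x1+2 = 1*t1^2" "x1+6 = 1*u1^2" using assms(4) unfolding triv_def by auto
  obtain s2 t2 u2 where b: "x2 = 6*s2^2" "x2+2 = 2*t2^2" "x2+6 = 3*u2^2" using assms(5) unfolding ocls_def by auto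
  have e: "(1::rat)*6 = 6*1^2" "(1::rat)*2 = 2*1^2" "(1::rat)*3 = 3*1^2" by simp_all
  show ?thesis unfolding ocls_def
    using p cls_step[OF _ a(1) b(1) n1(1) n2(1) e(1)] cls_step[OF _ a(2) b(2) n1(2) n2(2) e(2)]
      cls_step[OF _ a(3) b(3) n1(3) n2(3) e(3)] by auto
qed

lemma cls_ot:
  assumes "oncurve (Some (x1,y1))" "oncurve (Some (x2,y2))"
    "E1_add (Some (x1,y1)) (Some (x2,y2)) = Some (x3,y3)" "ocls x1" "triv x2"
  shows "ocls x3"
proof -
  note p = add_prod[OF assms(1-3)]
  note n1 = ocls_nz[OF assms(4)] and n2 = triv_nz[OF assms(5)]
  obtain s1 t1 u1 where a: "x1 = 6*s1^2" "x1+2 = 2*t1^2" "x1+6 = 3*u1^2" using assms(4) unfolding ocls_def by auto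
  obtain s2 t2 u2 where b: "x2 = 1*s2^2" "x2+2 = 1*t2^2" "x2+6 = 1*u2^2" using assms(5) unfolding triv_def by auto
  have e: "(6::rat)*1 = 6*1^2" "(2::rat)*1 = 2*1^2" "(3::rat)*1 = 3*1^2" by simp_all
  show ?thesis unfolding ocls_def
    using p cls_step[OF _ a(1) b(1) n1(1) n2(1) e(1)] cls_step[OF _ a(2) b(2) n1(2) n2(2) e(2)]
      cls_step[OF _ a(3) b(3) n1(3) n2(3) e(3)] by auto
qed

lemma cls_oo:
  assumes "oncurve (Some (x1,y1))" "oncurve (Some (x2,y2))"
    "E1_add (Some (x1,y1)) (Some (x2,y2)) = Some (x3,y3)" "ocls x1" "ocls x2"
  shows "triv x3"
proof -
  note p = add_prod[OF assms(1-3)]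
  note n1 = ocls_nz[OF assms(4)] and n2 = ocls_nz[OF assms(5)]
  obtain s1 t1 u1 where a: "x1 = 6*s1^2" "x1+2 = 2*t1^2" "x1+6 = 3*u1^2" using assms(4) unfolding ocls_def by auto
  obtain s2 t2 u2 where b: "x2 = 6*s2^2" "x2+2 = 2*t2^2" "x2+6 = 3*u2^2" using assms(5) unfolding ocls_def by auto
  have e: "(6::rat)*6 = 1*6^2" "(2::rat)*2 = 1*2^2" "(3::rat)*3 = 1*3^2" by simp_all
  have "\<exists>u. x3 = 1*u^2" "\<exists>u. x3+2 = 1*u^2" "\<exists>u. x3+6 = 1*u^2"
    using p cls_step[OF _ a(1) b(1) n1(1) n2(1) e(1)] cls_step[OF _ a(2) b(2) n1(2) n2(2) e(2)]
      cls_step[OF _ a(3) b(3) n1(3) n2(3) e(3)] by auto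
  thus ?thesis unfolding triv_def by simp
qed



lemma P_on: "oncurve P_pt" by (simp add: P_pt_def fc_def)

lemma twoP: "E1_add (Some (6,24)) (Some (6,24)) = Some (1/4, 15/8)"
  by (simp add: E1_add_def Let_def power2_eq_square)

lemma triv_quarter: "triv (1/4)"
  unfolding triv_def
  by (intro conjI exI[of _ "1/2"] exI[of _ "3/2"] exI[of _ "5/2"]) (simp_all add: power2_eq_square)

lemma ocls_6: "ocls 6"
  unfolding ocls_def
  by (intro conjI exI[of _ "1"] exI[of _ "2"]) (simp_all add: power2_eq_square)

lemma quarter_on: "oncurve (Some (1/4, 15/8))" by (simp add: fc_def power2_eq_square)

lemma orbit_inv:
  "oncurve (E1_nmul n P_pt) \<and> (odd n \<longrightarrow> (\<exists>x y. E1_nmul n P_pt = Some (x,y) \<and> ocls x)) \<and>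
   (even n \<longrightarrow> (E1_nmul n P_pt = None \<or> (\<exists>x y. E1_nmul n P_pt = Some (x,y) \<and> triv x)))"
proof (induction n)
  case 0 thus ?case by simp
next
  case (Suc n)
  define S where "S = E1_nmul n P_pt"
  have on: "oncurve S" and IHo: "odd n \<longrightarrow> (\<exists>x y. S = Some (x,y) \<and> ocls x)"
    and IHe: "even n \<longrightarrow> (S = None \<or> (\<exists>x y. S = Some (x,y) \<and> triv x))" using Suc S_def by auto
  have step: "E1_nmul (Suc n) P_pt = E1_add (Some (6,24)) S" unfolding S_def by (simp add: P_pt_def)
  have on2: "oncurve (E1_nmul (Suc n) P_pt)" unfolding step using oncurve_add[OF P_on on] by (simp add: P_pt_def)
  show ?case
  proof (cases S)
    case None
    hence "even n" using IHo by auto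
    thus ?thesis using on2 step None ocls_6 by auto
  next
    case (Some s) then obtain x y where Sx: "S = Some (x,y)" by (cases s) auto
    have cy: "y^2 = fc x" using on Sx by simp
    show ?thesis
    proof (cases "x = 6")
      case True
      have "y^2 = 24^2" using cy True by (simp add: fc_def)
      hence y: "y = 24 \<or> y = -24" by (metis power2_eq_iff)
      show ?thesis
      proof (cases "even n")
        case True
        then obtain x' y' where "S = Some (x',y')" "triv x'" using IHe Sx by auto
        hence "triv 6" using Sx \<open>x = 6\<close> by simp
        thus ?thesis unfolding triv_def using not_sq6 by metis
      next
        case False
        show ?thesis
        proof (cases "y = 24")
          case True
          have "E1_nmul (Suc n) P_pt = Some (1/4, 15/8)" unfolding step Sx \<open>x = 6\<close> True twoP ..
          hence "\<exists>x y. E1_nmul (Suc n) P_pt = Some (x,y) \<and> triv x" using triv_quarter by blast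
          thus ?thesis using False on2 by auto
        next
          case F2: False
          hence "y = -24" using y by simp
          hence "E1_nmul (Suc n) P_pt = None" unfolding step Sx \<open>x = 6\<close> by (simp add: E1_add_def)
          thus ?thesis using False by auto
        qed
      qed
    next
      case False
      hence ne: "6 \<noteq> x" by simp
      obtain x3 y3 where R: "E1_add (Some (6,24)) (Some (x,y)) = Some (x3,y3)"
        unfolding add_chord[OF ne] by blast
      have p6: "oncurve (Some (6,24))" using P_on by (simp add: P_pt_def)
      have o1: "oncurve (Some (x,y))" using on Sx by simp
      show ?thesis
      proof (cases "even n")
        case True
        then obtain x' y' where "S = Some (x',y')" "triv x'" using IHe Sx by auto
        hence tx: "triv x" using Sx by simp
        have "ocls x3" by (rule cls_ot[OF p6 o1 R ocls_6 tx])
        thus ?thesis using True on2 step Sx R by auto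
      next
        case False
        then obtain x' y' where "S = Some (x',y')" "ocls x'" using IHo Sx by auto
        hence tx: "ocls x" using Sx by simp
        have "triv x3" by (rule cls_oo[OF p6 o1 R ocls_6 tx])
        thus ?thesis using False on2 step Sx R by auto
      qed
    qed
  qed
qed

lemma odd_mult:
  assumes "odd n" shows "\<exists>x y. E1_nmul n P_pt = Some (x,y) \<and> ocls x \<and> oncurve (Some (x,y))"
  using orbit_inv[of n] assms by auto

lemma hyp_R0:
  assumes q: "prime q" and h: "\<exists>Q \<in> red q ` H_set. \<exists>a b. Q = Some (a, b) \<and> [a = -18] (mod q)"
  shows "\<exists>x y. oncurve (Some (x,y)) \<and> ocls x \<and> qint q x \<and> qzero q (x + 18)"
proof -
  obtain k a b where k: "odd k" "red q (E1_mul k P_pt) = Some (a,b)" "[a = -18] (mod q)"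
    using h unfolding H_set_def by auto
  define n where "n = nat \<bar>k\<bar>"
  have "odd n" using k(1) unfolding n_def by (simp add: even_nat_iff)
  then obtain x y where xy: "E1_nmul n P_pt = Some (x,y)" "ocls x" "oncurve (Some (x,y))"
    using odd_mult by blast
  have "\<exists>y'. E1_mul k P_pt = Some (x,y')"
    unfolding E1_mul_def using xy(1) unfolding n_def by (auto simp: E1_neg_def)
  then obtain y' where y': "E1_mul k P_pt = Some (x,y')" by blast
  have nd: "\<not> q dvd snd (quotient_of x)" and ar: "a = rat_red q x"
    using k(2) unfolding y' red_def by (auto split: if_splits)
  have qi: "qint q x" using nd qint_iff_den[OF q] by simp
  have z1: "qzero q (x - of_int a)" using rat_red_props[OF q qi] ar by simp
  have "q dvd a + 18" using k(3) by (simp add: cong_iff_dvd_diff)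
  hence z2: "qzero q (of_int (a + 18))" using qzero_int_iff[OF q] by blast
  have "qzero q ((x - of_int a) + of_int (a+18))" by (rule qzero_add[OF q z1 z2])
  hence "qzero q (x + 18)" by simp
  thus ?thesis using xy qi by blast
qed

definition Dseq :: "nat \<Rightarrow> rpoint" where
  "Dseq j = ((\<lambda>R. E1_add R R) ^^ j) (Some (1/4, 15/8))"

lemma dbl_formula:
  assumes "y^2 = fc x" "y \<noteq> 0" "fc x \<noteq> 0"
  shows "((3 * x^2 + 16 * x + 12) / (2 * y))^2 - 8 - x - x = (x^2 - 12)^2 / (4 * fc x)"
proof -
  have "((3 * x^2 + 16 * x + 12) / (2 * y))^2 = (3 * x^2 + 16 * x + 12)^2 / (4 * fc x)"
    using assms(1) by (simp add: power_divide power_mult_distrib)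
  moreover have "(3 * x^2 + 16 * x + 12)^2 / (4 * fc x) - 8 - x - x = (x^2 - 12)^2 / (4 * fc x)"
    using assms(3) by (simp add: field_simps fc_def) (simp add: algebra_simps power2_eq_square)
  ultimately show ?thesis by simp
qed

lemma subst_formula:
  fixes a b K :: rat
  assumes "a \<noteq> 0" "b \<noteq> 0" "K \<noteq> 0" "a + 2*K*b \<noteq> 0" "a + 6*K*b \<noteq> 0"
  shows "((a/(K*b))^2 - 12)^2 / (4 * fc (a/(K*b))) =
     (a^2 - 12*K^2*b^2)^2 / (4*K*(b*a*(a + 2*K*b)*(a + 6*K*b)))"
proof -
  have f: "fc (a/(K*b)) = a*(a + 2*K*b)*(a + 6*K*b) / (K*b)^3"
    using assms by (simp add: fc_def field_simps power3_eq_cube)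
  have g: "(a/(K*b))^2 - 12 = (a^2 - 12*K^2*b^2) / (K*b)^2"
    using assms by (simp add: field_simps power2_eq_square)
  have aux: "\<And>N A B. A \<noteq> 0 \<Longrightarrow> B \<noteq> 0 \<Longrightarrow> (N / (K*b)^2)^2 / (4 * (a*A*B / (K*b)^3)) = N^2 / (4*K*(b*a*A*B))"
    using assms(1-3) by (simp add: field_simps power2_eq_square power3_eq_cube)
  show ?thesis unfolding f g by (rule aux[OF assms(4,5)])
qed

lemma odd_ne0: "odd (a::int) \<Longrightarrow> (of_int a :: rat) \<noteq> 0" by auto

lemma Dinv: "\<exists>x y a b. Dseq j = Some (x,y) \<and> y^2 = fc x \<and> triv x \<and> odd a \<and> odd b \<and>
   x = of_int a / (of_int (4^(Suc j)) * of_int b)"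
proof (induction j)
  case 0
  show ?case unfolding Dseq_def using quarter_on triv_quarter
    by (intro exI[of _ "1/4"] exI[of _ "15/8"] exI[of _ 1] exI[of _ 1]) auto
next
  case (Suc j)
  then obtain x y a b where h: "Dseq j = Some (x,y)" "y^2 = fc x" "triv x" "odd a" "odd b"
    "x = of_int a / (of_int (4^(Suc j)) * of_int b)" by blast
  define K :: int where "K = 4^(Suc j)"
  have Ke: "even K" unfolding K_def by simp
  have fcn: "fc x \<noteq> 0" using triv_nz[OF h(3)] by (simp add: fc_def)
  have y0: "y \<noteq> 0" using h(2) fcn by auto
  have Ds: "Dseq (Suc j) = E1_add (Some (x,y)) (Some (x,y))" unfolding Dseq_def using h(1) unfolding Dseq_def by simp
  obtain x3 y3 where R: "E1_add (Some (x,y)) (Some (x,y)) = Some (x3,y3)"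
    unfolding add_tangent[OF y0] by blast
  have x3: "x3 = (x^2 - 12)^2 / (4 * fc x)"
    using R unfolding add_tangent[OF y0] using dbl_formula[OF h(2) y0 fcn] by simp
  define A where "A = a + 2*K*b"
  define B where "B = a + 6*K*b"
  define N where "N = a^2 - 12*K^2*b^2"
  have oA: "odd A" unfolding A_def using h(4) by simp
  have oB: "odd B" unfolding B_def using h(4) by simp
  have oN: "odd (N^2)" unfolding N_def using h(4) Ke by simp
  have ob: "odd (b*a*A*B)" using oA oB h(4,5) by simp
  have x3': "x3 = of_int (N^2) / (of_int (4^(Suc (Suc j))) * of_int (b*a*A*B))"
  proof -
    have "x3 = ((of_int a/(of_int K*of_int b))^2 - 12)^2 / (4 * fc (of_int a/(of_int K*of_int b)))"
      using x3 h(6) unfolding K_def by simp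
    also have "\<dots> = (of_int a^2 - 12*of_int K^2*of_int b^2)^2 / (4*of_int K*(of_int b*of_int a*(of_int a + 2*of_int K*of_int b)*(of_int a + 6*of_int K*of_int b)))"
      apply (rule subst_formula)
      using odd_ne0[OF h(4)] odd_ne0[OF h(5)] odd_ne0[OF oA] odd_ne0[OF oB] Ke
      unfolding A_def B_def by (auto simp: K_def)
    also have "\<dots> = of_int (N^2) / (of_int (4^(Suc (Suc j))) * of_int (b*a*A*B))"
      unfolding N_def A_def B_def K_def by simp
    finally show ?thesis .
  qed
  have on3: "oncurve (Some (x3,y3))" using oncurve_add[of "Some (x,y)" "Some (x,y)"] h(2) R by simp
  have "triv x3" using cls_tt[OF _ _ R h(3) h(3)] h(2) by simp
  show ?case
    apply (rule exI[of _ x3], rule exI[of _ y3], rule exI[of _ "N^2"], rule exI[of _ "b*a*A*B"])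
    apply (intro conjI)
    using Ds R apply simp
    using on3 apply simp
    using \<open>triv x3\<close> apply simp
    using oN apply simp
    using ob apply simp
    by (rule x3')
qed

lemma Dseq_inj: assumes "Dseq i = Dseq j" shows "i = j"
proof (rule ccontr)
  assume ne: "i \<noteq> j"
  have gen: False if lt: "i' < j'" and eq: "Dseq i' = Dseq j'" for i' j'
  proof -
    obtain x y a b where h: "Dseq i' = Some (x,y)" "odd a" "odd b"
      "x = of_int a / (of_int (4^(Suc i')) * of_int b)" using Dinv[of i'] by blast
    obtain x' y' a' b' where h': "Dseq j' = Some (x',y')" "odd a'" "odd b'"
      "x' = of_int a' / (of_int (4^(Suc j')) * of_int b')" using Dinv[of j'] by blast
    have "x = x'" using h h' eq by simp
    hence "a * (4^(Suc j') * b') = a' * (4^(Suc i') * b)"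
      using h(4) h'(4) frac_eq[of "4^(Suc i') * b" "4^(Suc j') * b'" a a'] h(3) h'(3) by auto
    moreover have "(4::int)^(Suc j') = 4^(Suc i') * 4^(j' - i')" using lt by (simp flip: power_add)
    ultimately have "4^(Suc i') * (a * 4^(j' - i') * b') = 4^(Suc i') * (a' * b)" by (simp add: ac_simps)
    hence "a * 4^(j' - i') * b' = a' * b" by simp
    moreover have "even (a * 4^(j' - i') * b')" using lt by simp
    moreover have "odd (a' * b)" using h(3) h'(2) by simp
    ultimately show False by simp
  qed
  show False using ne gen[of i j] gen[of j i] assms by (metis linorder_neqE_nat)
qed

lemma Dseq_props: "\<exists>x y. Dseq j = Some (x,y) \<and> oncurve (Some (x,y)) \<and> triv x"
  using Dinv[of j] by auto



lemma q_small: assumes "prime (q::int)" "q > 3" shows "\<not> q dvd 2" "\<not> q dvd 3"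
proof -
  show "\<not> q dvd 2" using assms zdvd_imp_le[of q 2] by auto
  show "\<not> q dvd 3" using assms zdvd_imp_le[of q 3] by auto
qed

lemma q_ndvd_23: assumes "prime (q::int)" "q > 3" "\<not> q dvd k" shows "\<not> q dvd (2*k)" "\<not> q dvd (3*k)"
  using q_small[OF assms(1,2)] assms(3) prime_dvd_mult_iff[OF assms(1)] by blast+

lemma unit_const: assumes "prime q" "q > 3" shows
  "\<not> qzero q 1" "\<not> qzero q 2" "\<not> qzero q 12" "\<not> qzero q (-8)" "\<not> qzero q 24" "\<not> qzero q 6"
proof -
  have d1: "\<not> q dvd 1" using prime_ndvd1[OF assms(1)] .
  have d2: "\<not> q dvd 2" using q_small[OF assms] by simp
  have d4: "\<not> q dvd (2*2)" using q_ndvd_23[OF assms d2] by simp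
  have d8: "\<not> q dvd (2*(2*2))" using q_ndvd_23[OF assms d4] by simp
  have d12: "\<not> q dvd (3*(2*2))" using q_ndvd_23[OF assms d4] by simp
  have d24: "\<not> q dvd (2*(3*(2*2)))" using q_ndvd_23[OF assms d12] by simp
  have d6: "\<not> q dvd (3*2)" using q_ndvd_23[OF assms d2] by simp
  show "\<not> qzero q 1" using qzero_int_iff[OF assms(1), of 1] d1 by simp
  show "\<not> qzero q 2" using qzero_int_iff[OF assms(1), of 2] d2 by simp
  show "\<not> qzero q 12" using qzero_int_iff[OF assms(1), of 12] d12 by simp
  show "\<not> qzero q (-8)" using qzero_int_iff[OF assms(1), of "-8"] d8 by simp
  show "\<not> qzero q 24" using qzero_int_iff[OF assms(1), of 24] d24 by simp
  show "\<not> qzero q 6" using qzero_int_iff[OF assms(1), of 6] d6 by simp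
qed

lemma unit_mult: assumes "prime q" "qint q u" "\<not> qzero q u" "qint q v" "\<not> qzero q v"
  shows "\<not> qzero q (u*v)"
  using qzero_mult_cases[OF assms(1,2,4)] assms(3,5) by blast

lemma qint_fc: "prime q \<Longrightarrow> qint q x \<Longrightarrow> qint q (fc x)"
  unfolding fc_def by (intro qint_mult qint_add qint_num) auto

lemma qint_y: assumes "prime q" "y^2 = fc x" "qint q x" shows "qint q y"
  using qint_sq[OF assms(1)] qint_fc[OF assms(1,3)] assms(2) by simp

lemma deriv_unit: assumes q: "prime q" "q > 3" and c: "y^2 = fc x" and qi: "qint q x" and qz: "qzero q y"
  shows "qint q (3 * x^2 + 16 * x + 12)" "\<not> qzero q (3 * x^2 + 16 * x + 12)"
proof -
  have p: "prime q" by (rule q(1))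
  show qd: "qint q (3 * x^2 + 16 * x + 12)" by (intro qint_add qint_mult qint_pow qint_num p qi)
  have "qzero q (y*y)" by (rule qzero_mult[OF p qz qzero_imp_qint[OF qz]])
  hence "qzero q (x*(x+2)*(x+6))" using c by (simp add: fc_def power2_eq_square)
  moreover have qa: "qint q (x+2)" "qint q (x+6)" by (intro qint_add qi qint_num p)+
  ultimately have "qzero q (x*(x+2)) \<or> qzero q (x+6)"
    using qzero_mult_cases[OF p qint_mult[OF p qi qa(1)] qa(2)] by blast
  hence cases: "qzero q x \<or> qzero q (x+2) \<or> qzero q (x+6)"
    using qzero_mult_cases[OF p qi qa(1)] by blast
  show "\<not> qzero q (3 * x^2 + 16 * x + 12)"
  proof -
    { assume h: "qzero q x"
      have "qzero q (x * (3*x + 16))" by (rule qzero_mult[OF p h]) (intro qint_add qint_mult qint_num p qi)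
      hence "\<not> qzero q (12 + x * (3*x + 16))" using unit_add[OF p qint_num[OF p] unit_const(3)[OF q]] by blast
      moreover have eq: "12 + x * (3*x + 16) = 3 * x^2 + 16 * x + 12" by (simp add: algebra_simps power2_eq_square)
      ultimately have ?thesis by (simp only: eq not_False_eq_True) }
    moreover
    { assume h: "qzero q (x+2)"
      define e where "e = x + 2"
      have "qzero q (e * (3*e + 4))" unfolding e_def by (rule qzero_mult[OF p h]) (intro qint_add qint_mult qint_num p qi)
      moreover have "qint q (-8)" using qint_int[OF p, of "-8"] by simp
      ultimately have "\<not> qzero q (-8 + e * (3*e + 4))" using unit_add[OF p _ unit_const(4)[OF q]] by blast
      moreover have "-8 + e * (3*e + 4) = 3 * x^2 + 16 * x + 12" unfolding e_def by (simp add: algebra_simps power2_eq_square)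
      ultimately have ?thesis by (simp only: not_False_eq_True) }
    moreover
    { assume h: "qzero q (x+6)"
      define e where "e = x + 6"
      have "qzero q (e * (3*e - 20))" unfolding e_def by (rule qzero_mult[OF p h]) (intro qint_add qint_diff qint_mult qint_num p qi)
      hence "\<not> qzero q (24 + e * (3*e - 20))" using unit_add[OF p qint_num[OF p] unit_const(5)[OF q]] by blast
      moreover have "24 + e * (3*e - 20) = 3 * x^2 + 16 * x + 12" unfolding e_def by (simp add: algebra_simps power2_eq_square)
      ultimately have ?thesis by (simp only: not_False_eq_True) }
    ultimately show ?thesis using cases by blast
  qed
qed

lemma nonqint_sq_add: assumes "prime q" "\<not> qint q l" "qint q c" shows "\<not> qint q (l^2 - c)"
proof
  assume "qint q (l^2 - c)"
  hence "qint q (l^2 - c + c)" using qint_add[OF assms(1) _ assms(3)] by blast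
  hence "qint q l" using qint_sq[OF assms(1)] by simp
  thus False using assms(2) by simp
qed

lemma beta:
  assumes q: "prime q" and qgt: "q > 3" and ca: "oncurve (Some (a,b))" and qa: "qint q a"
    and ck: "oncurve (Some (xk,yk))" and nk: "\<not> qint q xk"
  shows "\<exists>x3 y3. E1_add (Some (a,b)) (Some (xk,yk)) = Some (x3,y3) \<and> qzero q (x3 - a)"
proof -
  have ne: "a \<noteq> xk" using qa nk by auto
  have cb: "b^2 = fc a" and cy: "yk^2 = fc xk" using ca ck by auto
  define l where "l = (yk - b)/(xk - a)"
  define x3 where "x3 = l^2 - 8 - a - xk"
  obtain y3 where R: "E1_add (Some (a,b)) (Some (xk,yk)) = Some (x3,y3)"
    unfolding add_chord[OF ne] l_def[symmetric] x3_def by blast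
  have xk0: "xk \<noteq> 0" using nk qint_0[OF q] by auto
  have d0: "xk - a \<noteq> 0" using ne by simp
  have la: "l*(xk - a) = yk - b" using d0 unfolding l_def by simp
  have "(x3 - a) * (xk - a)^2 = (l*(xk - a))^2 - (8 + 2*a + xk)*(xk-a)^2"
    unfolding x3_def by (simp add: algebra_simps power2_eq_square)
  hence i1: "(x3 - a) * (xk - a)^2 = (yk - b)^2 - (8 + 2*a + xk)*(xk-a)^2" unfolding la .
  also have "\<dots> = yk^2 - 2*b*yk + b^2 - (8 + 2*a + xk)*(xk-a)^2" by (simp add: power2_eq_square algebra_simps)
  also have "\<dots> = (3*a^2+16*a+12)*xk - 2*b*yk + (12*a - a^3)"
    unfolding cb cy by (simp add: fc_def algebra_simps power2_eq_square power3_eq_cube)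
  finally have i2: "(x3 - a) * (xk - a)^2 = (3*a^2+16*a+12)*xk - 2*b*yk + (12*a - a^3)" .
  define z where "z = 1/xk"
  define w where "w = yk * z^2"
  define N where "N = (3*a^2+16*a+12)*z - 2*b*w + (12*a - a^3)*z^2"
  have xz: "xk * z = 1" unfolding z_def using xk0 by simp
  have h: "(xk - a)*z = 1 - a*z" using xz by (simp add: algebra_simps)
  have eq: "(x3 - a) * (1 - a*z)^2 = N"
  proof -
    have "(x3 - a) * (1 - a*z)^2 = (x3 - a) * ((xk - a)*z)^2" by (simp only: h)
    also have "\<dots> = ((x3 - a) * (xk - a)^2) * z^2" by (simp add: power_mult_distrib)
    also have "\<dots> = ((3*a^2+16*a+12)*xk - 2*b*yk + (12*a - a^3)) * z^2" by (simp only: i2)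
    also have "\<dots> = (3*a^2+16*a+12)*(xk*z)*z - 2*b*w + (12*a - a^3)*z^2"
      by (simp add: w_def algebra_simps power2_eq_square)
    also have "\<dots> = N" unfolding xz N_def by simp
    finally show ?thesis .
  qed
  have qz: "qzero q z" unfolding z_def by (rule nonqint_inv[OF q nk])
  have qzi: "qint q z" by (rule qzero_imp_qint[OF qz])
  have w2: "w^2 = z * ((1 + 2*z) * (1 + 6*z))"
  proof -
    have "w^2 = yk^2 * z^4" unfolding w_def by (simp add: power_mult_distrib power_mult[symmetric])
    hence "w^2 = fc xk * z^4" using cy by simp
    also have "\<dots> = (xk*z)*((xk*z + 2*z)*(xk*z + 6*z))*z"
      by (simp add: fc_def algebra_simps power2_eq_square power4_eq_xxxx)
    finally show ?thesis using xz by simp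
  qed
  have "qzero q (w^2)" unfolding w2
    by (rule qzero_mult[OF q qz]) (intro qint_mult qint_add qint_num qint_1 q qzi)
  hence qw: "qzero q w" by (rule qzero_sq[OF q])
  have qb: "qint q b" by (rule qint_y[OF q cb qa])
  have qN: "qzero q N" unfolding N_def
    apply (intro qzero_add qzero_diff q)
    apply (rule qzero_mult2[OF q _ qz], intro qint_add qint_mult qint_pow qint_num q qa)
    apply (rule qzero_mult2[OF q _ qw], intro qint_mult qint_num q qb)
    apply (rule qzero_mult2[OF q _], intro qint_diff qint_mult qint_pow qint_num q qa)
    unfolding power2_eq_square by (rule qzero_mult[OF q qz qzi])
  have az: "qzero q (a*z)" by (rule qzero_mult2[OF q qa qz])
  have u1: "\<not> qzero q (1 - a*z)"
    using unit_add[OF q qint_1[OF q] unit_const(1)[OF q qgt] qzero_minus[OF az]] by simp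
  have qi1: "qint q (1 - a*z)" by (intro qint_diff qint_1 q qint_mult qa qzi)
  have u2: "\<not> qzero q ((1 - a*z)^2)" unfolding power2_eq_square by (rule unit_mult[OF q qi1 u1 qi1 u1])
  have qi2: "qint q ((1 - a*z)^2)" by (intro qint_pow q qi1)
  have nz: "(1 - a*z)^2 \<noteq> 0" using u2 qzero_0[OF q] by auto
  have "x3 - a = N / (1 - a*z)^2" using eq nz by (simp add: field_simps)
  hence "qzero q (x3 - a)" using qdiv_zero[OF q qN qi2 u2] by simp
  thus ?thesis using R by blast
qed



lemma qzero_half: assumes q: "prime q" "q > 3" and h: "qzero q (2*y)" shows "qzero q y"
proof -
  have "qzero q ((2*y)/2)" by (rule qdiv_zero[OF q(1) h qint_num[OF q(1)] unit_const(2)[OF q]])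
  thus ?thesis by simp
qed

lemma alpha:
  assumes q: "prime q" "q > 3"
    and c1: "y1^2 = fc x1" and c2: "y2^2 = fc x2"
    and q1: "qint q x1" and q2: "qint q x2"
    and zx: "qzero q (x1 - x2)" and zy: "qzero q (y1 - y2)"
    and ne: "(x1,y1) \<noteq> (x2,y2)"
  shows "\<exists>x3 y3. E1_add (Some (x1,-y1)) (Some (x2,y2)) = Some (x3,y3) \<and> \<not> qint q x3"
proof -
  have p: "prime q" by (rule q(1))
  have qy1: "qint q y1" by (rule qint_y[OF p c1 q1])
  have qy2: "qint q y2" by (rule qint_y[OF p c2 q2])
  have zx': "qzero q (x2 - x1)" using qzero_minus[OF zx] by simp
  have zy': "qzero q (y2 - y1)" using qzero_minus[OF zy] by simp
  show ?thesis
  proof (cases "x1 = x2")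
    case True
    hence "y1 \<noteq> y2" using ne by simp
    hence y21: "y2 = -y1" using same_x[of y1 x1 y2] c1 c2 True by auto
    hence y0: "-y1 \<noteq> 0" using \<open>y1 \<noteq> y2\<close> by auto
    have "qzero q (2*y1)" using zy y21 by simp
    hence zy1: "qzero q y1" by (rule qzero_half[OF q])
    note du = deriv_unit[OF q c1 q1 zy1]
    define l where "l = (3 * x1^2 + 16 * x1 + 12) / (2 * (-y1))"
    have zd: "qzero q (2 * (-y1))" by (rule qzero_mult2[OF p qint_num[OF p] qzero_minus[OF zy1]])
    have nl: "\<not> qint q l" unfolding l_def by (rule not_qint_div[OF p du zd]) (use y0 in simp)
    have nx: "\<not> qint q (l^2 - (8 + x1 + x1))"
      by (rule nonqint_sq_add[OF p nl]) (intro qint_add qint_num p q1)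
    have "E1_add (Some (x1,-y1)) (Some (x2,y2)) = Some (l^2 - 8 - x1 - x1, l * (x1 - (l^2 - 8 - x1 - x1)) - (-y1))"
      unfolding True[symmetric] y21 add_tangent[OF y0] l_def ..
    moreover have eqx: "l^2 - 8 - x1 - x1 = l^2 - (8 + x1 + x1)" by simp
    ultimately show ?thesis using nx unfolding eqx by blast
  next
    case False
    define l where "l = (y2 - -y1)/(x2 - x1)"
    have d0: "x2 - x1 \<noteq> 0" using False by simp
    have nl: "\<not> qint q l"
    proof (cases "qzero q y1")
      case False
      have u2: "\<not> qzero q (2*y1)" using unit_mult[OF p qint_num[OF p] unit_const(2)[OF q] qy1 False] .
      have "\<not> qzero q (2*y1 + (y2 - y1))" by (rule unit_add[OF p _ u2 zy']) (intro qint_mult qint_num p qy1)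
      moreover have "qint q (2*y1 + (y2 - y1))" by (intro qint_add qint_diff qint_mult qint_num p qy1 qy2)
      ultimately have "\<not> qint q ((2*y1 + (y2 - y1))/(x2 - x1))" using not_qint_div[OF p _ _ zx' d0] by blast
      thus ?thesis unfolding l_def by (simp add: algebra_simps)
    next
      case True
      note du = deriv_unit[OF q c1 q1 True]
      define g where "g = x1^2 + x1*x2 + x2^2 + 8*(x1+x2) + 12"
      have gid: "g = (3 * x1^2 + 16 * x1 + 12) + (x2 - x1)*(x2 + 2*x1 + 8)"
        unfolding g_def by (simp add: algebra_simps power2_eq_square)
      have zt: "qzero q ((x2 - x1)*(x2 + 2*x1 + 8))" by (rule qzero_mult[OF p zx']) (intro qint_add qint_mult qint_num p q1 q2)
      have gu: "\<not> qzero q g" unfolding gid by (rule unit_add[OF p du zt])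
      have gq: "qint q g" unfolding g_def by (intro qint_add qint_mult qint_pow qint_num p q1 q2)
      have fac: "(y2 + y1)*(y2 - y1) = (x2 - x1) * g"
      proof -
        have "(y2 + y1)*(y2 - y1) = y2^2 - y1^2" by (simp add: algebra_simps power2_eq_square)
        also have "\<dots> = (x2 - x1) * g" unfolding c1 c2 g_def by (simp add: fc_def algebra_simps power2_eq_square)
        finally show ?thesis .
      qed
      have g0: "g \<noteq> 0" using gu qzero_0[OF p] by auto
      have yd: "y2 - y1 \<noteq> 0"
      proof
        assume "y2 - y1 = 0"
        hence "(x2 - x1) * g = 0" using fac by simp
        thus False using d0 g0 by simp
      qed
      have "l = g / (y2 - y1)" unfolding l_def using fac d0 yd by (simp add: field_simps)
      thus ?thesis using not_qint_div[OF p gq gu zy' yd] by simp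
    qed
    have nx: "\<not> qint q (l^2 - (8 + x1 + x2))"
      by (rule nonqint_sq_add[OF p nl]) (intro qint_add qint_num p q1 q2)
    have "E1_add (Some (x1,-y1)) (Some (x2,y2)) = Some (l^2 - 8 - x1 - x2, l * (x1 - (l^2 - 8 - x1 - x2)) - (-y1))"
      unfolding add_chord[OF False] l_def ..
    moreover have eqx: "l^2 - 8 - x1 - x2 = l^2 - (8 + x1 + x2)" by simp
    ultimately show ?thesis using nx unfolding eqx by blast
  qed
qed



definition recov :: "int \<times> int \<times> int \<times> int \<times> int \<Rightarrow> rat" where
  "recov X = (case X of (x0, x1, x2, x3, x4) \<Rightarrow> 6 * (of_int x0 / of_int x4)^2)"

definition Target :: "int \<Rightarrow> (int \<times> (int \<times> int \<times> int \<times> int \<times> int)) set" where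
  "Target q = {(D, X). squarefree D \<and> primitive5 X \<and> C_eqs D X \<and>
                   (q dvd D \<or> [fst (snd (snd (snd X))) = 0] (mod q))}"

lemma int_eq_from_rat: "(of_int a :: rat) = of_int b \<Longrightarrow> a = b" by simp

lemma mkpair:
  assumes q: "prime q" "q > 3" and oc: "ocls x" and z: "qzero q (x + 18)"
  shows "\<exists>P \<in> Target q. recov (snd P) = x"
proof -
  obtain u v w where uvw: "x = 6*u^2" "x + 2 = 2*v^2" "x + 6 = 3*w^2" using oc unfolding ocls_def by blast
  have xpos: "x > 0" using ocls_nz[OF oc] by simp
  define r1 where "r1 = v/2"
  define r2 where "r2 = w/2"
  have e1: "u^2 - 2*r1^2 + r2^2 = 0" unfolding r1_def r2_def using uvw
    by (simp add: power_divide, (simp add: field_simps)?)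
  have e3: "2*r1^2 - 3*r2^2 + 1 = 0" unfolding r1_def r2_def using uvw
    by (simp add: power_divide, (simp add: field_simps)?)
  have e4: "24*(2*r2^2 - r1^2) = x + 18" unfolding r1_def r2_def using uvw
    by (simp add: power_divide, (simp add: field_simps)?)
  obtain n0 d0 where nd0: "u = of_int n0 / of_int d0" "d0 > 0" by (rule rat_reduced) blast
  obtain n1 d1 where nd1: "r1 = of_int n1 / of_int d1" "d1 > 0" by (rule rat_reduced) blast
  obtain n2 d2 where nd2: "r2 = of_int n2 / of_int d2" "d2 > 0" by (rule rat_reduced) blast
  define A0 where "A0 = n0*d1*d2"
  define A1 where "A1 = n1*d0*d2"
  define A2 where "A2 = n2*d0*d1"
  define A4 where "A4 = d0*d1*d2"
  have A4p: "A4 > 0" unfolding A4_def using nd0 nd1 nd2 by simp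
  have uA: "u = of_int A0 / of_int A4" "r1 = of_int A1 / of_int A4" "r2 = of_int A2 / of_int A4"
    unfolding A0_def A1_def A2_def A4_def using nd0 nd1 nd2 by (simp_all add: field_simps)
  define g where "g = gcd A0 (gcd A1 (gcd A2 A4))"
  have gp: "g > 0" unfolding g_def using A4p by (simp add: gcd_pos_int)
  have gd: "g dvd A0" "g dvd A1" "g dvd A2" "g dvd A4" unfolding g_def
    by (meson gcd_dvd1 gcd_dvd2 dvd_trans)+
  define B0 where "B0 = A0 div g"
  define B1 where "B1 = A1 div g"
  define B2 where "B2 = A2 div g"
  define B4 where "B4 = A4 div g"
  have AB: "A0 = g*B0" "A1 = g*B1" "A2 = g*B2" "A4 = g*B4"
    unfolding B0_def B1_def B2_def B4_def using gd by simp_all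
  have B4p: "B4 > 0" using A4p gp AB(4) by (simp add: zero_less_mult_iff)
  have g0: "(of_int g :: rat) \<noteq> 0" using gp by simp
  have uB: "u = of_int B0 / of_int B4" "r1 = of_int B1 / of_int B4" "r2 = of_int B2 / of_int B4"
    using uA AB g0 by simp_all
  have B40: "(of_int B4 :: rat) \<noteq> 0" using B4p by simp
  have i1: "B0^2 - 2*B1^2 + B2^2 = 0"
  proof -
    have "(of_int B0/of_int B4)^2 - 2*(of_int B1/of_int B4)^2 + (of_int B2/of_int B4)^2 = (0::rat)"
      using e1 uB by simp
    hence "(of_int (B0^2 - 2*B1^2 + B2^2) :: rat) = 0" using B40
      by (simp add: power_divide field_simps)
    thus ?thesis by (simp only: of_int_eq_0_iff)
  qed
  have i3: "2*B1^2 - 3*B2^2 + B4^2 = 0"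
  proof -
    have "2*(of_int B1/of_int B4)^2 - 3*(of_int B2/of_int B4)^2 + 1 = (0::rat)"
      using e3 uB by simp
    hence "(of_int (2*B1^2 - 3*B2^2 + B4^2) :: rat) = 0" using B40
      by (simp add: power_divide field_simps)
    thus ?thesis by (simp only: of_int_eq_0_iff)
  qed
  define c where "c = 2*B2^2 - B1^2"
  have i4: "(of_int (24*c) :: rat) = of_int (B4^2) * (x + 18)"
  proof -
    have "24*(2*(of_int B2/of_int B4)^2 - (of_int B1/of_int B4)^2) = (x + 18 :: rat)"
      using e4 uB by simp
    thus ?thesis unfolding c_def using B40 by (simp add: power_divide field_simps)
  qed
  define D where "D = squarefree_part c"
  define s where "s = square_part c"
  have cD: "c = D * s^2" unfolding D_def s_def by (rule squarefree_decompose)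
  have sqD: "squarefree D" unfolding D_def by simp
  define X where "X = (B0, B1, B2, s, B4)"
  have ceq: "C_eqs D X" unfolding C_eqs_def X_def using i1 i3 cD c_def
    by (simp add: algebra_simps)
  have prim: "primitive5 X"
  proof -
    define h where "h = gcd B0 (gcd B1 (gcd B2 (gcd s B4)))"
    have hd: "h dvd B0" "h dvd B1" "h dvd B2" "h dvd B4" unfolding h_def
      by (meson gcd_dvd1 gcd_dvd2 dvd_trans)+
    have "g*h dvd A0" "g*h dvd A1" "g*h dvd A2" "g*h dvd A4" unfolding AB using hd by simp_all
    hence "g*h dvd g" unfolding g_def by simp
    hence "g*h dvd g*1" by simp
    hence "h dvd 1" using gp by (subst (asm) dvd_times_left_cancel_iff) auto
    moreover have "h \<ge> 0" unfolding h_def by simp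
    ultimately have "h = 1" by simp
    thus ?thesis unfolding primitive5_def X_def h_def by simp
  qed
  have qc: "q dvd c"
  proof -
    have "qzero q (of_int (B4^2) * (x + 18))" by (rule qzero_mult2[OF q(1) qint_int[OF q(1)] z])
    hence "qzero q (of_int (24*c))" using i4 by simp
    hence "q dvd 24*c" using qzero_int_iff[OF q(1)] by blast
    moreover have "\<not> q dvd 24" using unit_const(5)[OF q] qzero_int_iff[OF q(1), of 24] by simp
    ultimately show ?thesis using prime_dvd_mult_iff[OF q(1)] by blast
  qed
  have cond: "q dvd D \<or> [fst (snd (snd (snd X))) = 0] (mod q)"
  proof -
    have "q dvd D \<or> q dvd s^2" using qc cD prime_dvd_mult_iff[OF q(1)] by blast
    hence "q dvd D \<or> q dvd s" using prime_dvd_power[OF q(1)] by blast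
    thus ?thesis unfolding X_def by (simp add: cong_0_iff)
  qed
  have "(D, X) \<in> Target q" unfolding Target_def using sqD prim ceq cond by simp
  moreover have "recov X = x" unfolding recov_def X_def using uB uvw by simp
  ultimately show ?thesis by force
qed



lemma good_from_K:
  assumes q: "prime q" "q > 3" and r0: "oncurve (Some (a,b))" "ocls a" "qint q a" "qzero q (a + 18)"
    and k: "oncurve K" "K = Some (xk,yk)" "\<not> qint q xk" "triv xk"
  shows "\<exists>x y. E1_add (Some (a,b)) K = Some (x,y) \<and> oncurve (Some (x,y)) \<and> ocls x \<and> qzero q (x + 18)"
proof -
  obtain x3 y3 where R: "E1_add (Some (a,b)) (Some (xk,yk)) = Some (x3,y3)" "qzero q (x3 - a)"
    using beta[OF q r0(1,3) _ k(3)] k(1,2) by blast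
  have on: "oncurve (Some (x3,y3))" using oncurve_add[OF r0(1) k(1)] R k(2) by simp
  have oc: "ocls x3" using cls_ot[OF r0(1) _ R(1) r0(2) k(4)] k(1,2) by simp
  have "qzero q ((x3 - a) + (a + 18))" by (rule qzero_add[OF q(1) R(2) r0(4)])
  hence "qzero q (x3 + 18)" by simp
  thus ?thesis using R k(2) on oc by auto
qed

lemma inf_Ks:
  assumes q: "prime q" "q > 3"
  shows "\<exists>Ks. infinite Ks \<and> (\<forall>K\<in>Ks. oncurve K \<and> (\<exists>xk yk. K = Some (xk,yk) \<and> \<not> qint q xk \<and> triv xk))"
proof -
  define xD where "xD j = fst (the (Dseq j))" for j
  define yD where "yD j = snd (the (Dseq j))" for j
  have Dj: "Dseq j = Some (xD j, yD j) \<and> oncurve (Some (xD j, yD j)) \<and> triv (xD j)" for j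
    using Dseq_props[of j] unfolding xD_def yD_def by auto
  define G where "G j = (if qint q (xD j) then Some (rat_red q (xD j), rat_red q (yD j)) else None)" for j
  have fin: "finite (range G)"
  proof -
    have "range G \<subseteq> insert None (Some ` ({0..<q} \<times> {0..<q}))"
    proof
      fix t assume "t \<in> range G"
      then obtain j where t: "t = G j" by blast
      show "t \<in> insert None (Some ` ({0..<q} \<times> {0..<q}))"
      proof (cases "qint q (xD j)")
        case True
        have "qint q (yD j)" using qint_y[OF q(1) _ True] Dj[of j] by simp
        thus ?thesis using rat_red_props[OF q(1) True] rat_red_props[OF q(1)] t True unfolding G_def by auto
      next
        case False thus ?thesis using t unfolding G_def by simp
      qed
    qed
    thus ?thesis by (rule finite_subset) simp
  qed
  obtain i where infi: "infinite {j. G j = G i}"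
    using pigeonhole_infinite[of "UNIV :: nat set" G] fin by auto
  have injD: "inj Dseq" using Dseq_inj by (auto intro: injI)
  show ?thesis
  proof (cases "G i")
    case None
    define Ks where "Ks = Dseq ` {j. G j = G i}"
    have "infinite Ks" unfolding Ks_def using infi injD
      by (metis finite_imageD inj_on_subset subset_UNIV)
    moreover have "\<forall>K\<in>Ks. oncurve K \<and> (\<exists>xk yk. K = Some (xk,yk) \<and> \<not> qint q xk \<and> triv xk)"
    proof
      fix K assume "K \<in> Ks"
      then obtain j where j: "K = Dseq j" "G j = None" unfolding Ks_def using None by auto
      have "\<not> qint q (xD j)" using j(2) unfolding G_def by (auto split: if_splits)
      thus "oncurve K \<and> (\<exists>xk yk. K = Some (xk,yk) \<and> \<not> qint q xk \<and> triv xk)" using Dj[of j] j by auto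
    qed
    ultimately show ?thesis by blast
  next
    case (Some rr)
    define J where "J = {j. G j = G i} - {i}"
    have infJ: "infinite J" unfolding J_def using infi by simp
    define Kf where "Kf j = E1_add (E1_neg (Dseq i)) (Dseq j)" for j
    define Ks where "Ks = Kf ` J"
    have inj: "inj_on Kf J"
    proof
      fix j j' assume "j \<in> J" "j' \<in> J" "Kf j = Kf j'"
      hence "E1_add (Dseq i) (Kf j) = E1_add (Dseq i) (Kf j')" by simp
      moreover have "E1_add (Dseq i) (Kf k) = Dseq k" for k
        using cancel[of "E1_neg (Dseq i)" "Dseq k"] oncurve_neg[of "Dseq i"] Dj[of i] Dj[of k]
        unfolding Kf_def by simp
      ultimately have "Dseq j = Dseq j'" by simp
      thus "j = j'" by (rule Dseq_inj)
    qed
    have "infinite Ks" unfolding Ks_def using infJ inj finite_imageD by blast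
    moreover have "\<forall>K\<in>Ks. oncurve K \<and> (\<exists>xk yk. K = Some (xk,yk) \<and> \<not> qint q xk \<and> triv xk)"
    proof
      fix K assume "K \<in> Ks"
      then obtain j where j: "K = Kf j" "j \<in> J" unfolding Ks_def by auto
      have ji: "j \<noteq> i" "G j = G i" using j(2) unfolding J_def by auto
      have qi: "qint q (xD i)" using Some unfolding G_def by (auto split: if_splits)
      have qj: "qint q (xD j)" using Some ji(2) unfolding G_def by (auto split: if_splits)
      have rr: "rat_red q (xD i) = rat_red q (xD j)" "rat_red q (yD i) = rat_red q (yD j)"
        using ji(2) qi qj unfolding G_def by auto
      have c1: "(yD i)^2 = fc (xD i)" and c2: "(yD j)^2 = fc (xD j)" using Dj[of i] Dj[of j] by auto
      have qyi: "qint q (yD i)" by (rule qint_y[OF q(1) c1 qi])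
      have qyj: "qint q (yD j)" by (rule qint_y[OF q(1) c2 qj])
      have zx: "qzero q (xD i - xD j)"
        using qzero_diff[OF q(1) conjunct2[OF conjunct2[OF rat_red_props[OF q(1) qi]]]
                          conjunct2[OF conjunct2[OF rat_red_props[OF q(1) qj]]]] rr(1) by simp
      have zy: "qzero q (yD i - yD j)"
        using qzero_diff[OF q(1) conjunct2[OF conjunct2[OF rat_red_props[OF q(1) qyi]]]
                          conjunct2[OF conjunct2[OF rat_red_props[OF q(1) qyj]]]] rr(2) by simp
      have ne: "(xD i, yD i) \<noteq> (xD j, yD j)"
      proof
        assume "(xD i, yD i) = (xD j, yD j)"
        hence "Dseq i = Dseq j" using Dj[of i] Dj[of j] by simp
        thus False using Dseq_inj ji(1) by metis
      qed
      obtain x3 y3 where A: "E1_add (Some (xD i, - yD i)) (Some (xD j, yD j)) = Some (x3,y3)" "\<not> qint q x3"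
        using alpha[OF q c1 c2 qi qj zx zy ne] by blast
      have Kj: "K = Some (x3,y3)" using j(1) A(1) Dj[of i] Dj[of j] unfolding Kf_def by simp
      have on1: "oncurve (Some (xD i, - yD i))" using c1 by simp
      have on2: "oncurve (Some (xD j, yD j))" using c2 by simp
      have tr: "triv x3" using cls_tt[OF on1 on2 A(1)] Dj[of i] Dj[of j] by simp
      have "oncurve K" using oncurve_add[OF on1 on2] A(1) Kj by simp
      thus "oncurve K \<and> (\<exists>xk yk. K = Some (xk,yk) \<and> \<not> qint q xk \<and> triv xk)" using Kj A(2) tr by blast
    qed
    ultimately show ?thesis by blast
  qed
qed

lemma finite_to_one:
  assumes inf: "infinite Rs" and all: "\<forall>R\<in>Rs. \<exists>x y. R = Some (x,y) \<and> oncurve (Some (x,y))"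
  shows "infinite ((\<lambda>R. fst (the R)) ` Rs)"
proof
  assume fin: "finite ((\<lambda>R. fst (the R)) ` Rs)"
  define phi where "phi R = (fst (the R), snd (the R) \<ge> 0)" for R :: rpoint
  have "inj_on phi Rs"
  proof
    fix R R' assume RR: "R \<in> Rs" "R' \<in> Rs" "phi R = phi R'"
    obtain x y where R: "R = Some (x,y)" "y^2 = fc x" using all RR(1) by fastforce
    obtain x' y' where R': "R' = Some (x',y')" "y'^2 = fc x'" using all RR(2) by fastforce
    have xx: "x = x'" and sg: "(y \<ge> 0) = (y' \<ge> 0)" using RR(3) R R' unfolding phi_def by auto
    have "y' = y \<or> y' = -y" using same_x[of y x y'] R(2) R'(2) xx by simp
    hence "y = y'" using sg by auto
    thus "R = R'" using R R' xx by simp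
  qed
  moreover have "phi ` Rs \<subseteq> ((\<lambda>R. fst (the R)) ` Rs) \<times> UNIV" unfolding phi_def by auto
  hence "finite (phi ` Rs)" using fin by (rule finite_subset[OF _ finite_cartesian_product]) simp
  ultimately have "finite Rs" using finite_imageD by blast
  thus False using inf by simp
qed

theorem main_thm:
  fixes q :: int
  assumes "prime q" and "q > 3"
    and "\<exists>Q \<in> red q ` H_set. \<exists>a b. Q = Some (a, b) \<and> [a = -18] (mod q)"
  shows "infinite {(D, X). squarefree D \<and> primitive5 X \<and> C_eqs D X \<and>
                   (q dvd D \<or> [fst (snd (snd (snd X))) = 0] (mod q))}"
proof -
  have q: "prime q" "q > 3" by fact+
  obtain a b where r0: "oncurve (Some (a,b))" "ocls a" "qint q a" "qzero q (a + 18)"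
    using hyp_R0[OF q(1) assms(3)] by blast
  obtain Ks where Ks: "infinite Ks" "\<forall>K\<in>Ks. oncurve K \<and> (\<exists>xk yk. K = Some (xk,yk) \<and> \<not> qint q xk \<and> triv xk)"
    using inf_Ks[OF q] by blast
  define Rs where "Rs = E1_add (Some (a,b)) ` Ks"
  have "inj_on (E1_add (Some (a,b))) Ks"
  proof
    fix K K' assume "K \<in> Ks" "K' \<in> Ks" "E1_add (Some (a,b)) K = E1_add (Some (a,b)) K'"
    thus "K = K'" using cancel[OF r0(1), of K] cancel[OF r0(1), of K'] Ks(2) by metis
  qed
  hence infR: "infinite Rs" unfolding Rs_def using Ks(1) finite_imageD by blast
  have goodR: "\<forall>R\<in>Rs. \<exists>x y. R = Some (x,y) \<and> oncurve (Some (x,y)) \<and> ocls x \<and> qzero q (x + 18)"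
  proof
    fix R assume "R \<in> Rs"
    then obtain K where K: "K \<in> Ks" "R = E1_add (Some (a,b)) K" unfolding Rs_def by auto
    obtain xk yk where k: "oncurve K" "K = Some (xk,yk)" "\<not> qint q xk" "triv xk" using Ks(2) K(1) by blast
    show "\<exists>x y. R = Some (x,y) \<and> oncurve (Some (x,y)) \<and> ocls x \<and> qzero q (x + 18)"
      using good_from_K[OF q r0 k] K(2) by simp
  qed
  define Xs where "Xs = (\<lambda>R. fst (the R)) ` Rs"
  have infX: "infinite Xs" unfolding Xs_def by (rule finite_to_one[OF infR]) (use goodR in blast)
  have sub: "Xs \<subseteq> (\<lambda>P. recov (snd P)) ` Target q"
  proof
    fix x assume "x \<in> Xs"
    then obtain R where R: "R \<in> Rs" "x = fst (the R)" unfolding Xs_def by auto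
    obtain x' y' where R': "R = Some (x',y')" "ocls x'" "qzero q (x' + 18)" using goodR R(1) by blast
    have "x = x'" using R(2) R'(1) by simp
    then obtain P where "P \<in> Target q" "recov (snd P) = x" using mkpair[OF q R'(2,3)] by blast
    thus "x \<in> (\<lambda>P. recov (snd P)) ` Target q" by force
  qed
  show ?thesis
  proof
    assume "finite {(D, X). squarefree D \<and> primitive5 X \<and> C_eqs D X \<and>
                   (q dvd D \<or> [fst (snd (snd (snd X))) = 0] (mod q))}"
    hence "finite (Target q)" unfolding Target_def .
    hence "finite ((\<lambda>P. recov (snd P)) ` Target q)" by simp
    hence "finite Xs" using sub finite_subset by blast
    thus False using infX by simp
  qed
qed


theorem corollary6p3:
  fixes q :: int
  assumes "prime q" and "q > 3"
    and "\<exists>Q \<in> red q ` H_set. \<exists>a b. Q = Some (a, b) \<and> [a = -18] (mod q)"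
  shows "infinite {(D, X). squarefree D \<and> primitive5 X \<and> C_eqs D X \<and>
                   (q dvd D \<or> [fst (snd (snd (snd X))) = 0] (mod q))}"
  using main_thm[OF assms] .

end
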